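(* Let $(X^{(1)}_j)_{j\ge1}$ and $(X^{(2)}_j)_{j\ge1}$ be two independent i.i.d. families of $\mathbb{Z}^2$-valued random variables, each with mean zero and identity covariance, and assume $E[H(|X^{(i)}_1|)]<\infty$ for some continuous increasing $H\colon[0,\infty)\to(0,\infty)$ with $\lim_{n\to\infty}\log H(n)/\log n=\infty$. Let $\tau=\log n$, $T_\tau=n/\log n$, and consider the rescaled walks $S^{(i)}_m=T_\tau^{-1/2}\sum_{j=1}^mX^{(i)}_j$ on $T_\tau^{-1/2}\mathbb{Z}^2$ started at the origin, with law $P$. For $\eta>0$ and $k\in\{1,2\}$ let $B^{(k)}=\{(z_1,z_2)\in T_\tau^{-1/2}\mathbb{Z}^2: z_k=\eta(a+1/2)\text{ for some }a\in\mathbb{Z}\}$, and for $x$ let $B^{(k)}(x)$ be the set of points whose $k$-th coordinate equals that of $x$. Define $T^{i,(k)}_1=\inf\{m>0:S^{(i)}_m\in B^{(k)}\}$ and $T^{i,(k)}_j=\inf\{m>T^{i,(k)}_{j-1}: S^{(i)}_m\in B^{(k)},\ B^{(k)}(S^{(i)}_m)\ne B^{(k)}(S^{(i)}_{T^{i,(k)}_{j-1}})\}$. Let $C^{(k)}_n(\eta)=\sum_{i=1}^2\#\{j\ge1: T^{i,(k)}_j\le n\}$ be the total number of crossings in direction $k$ by both walks up to time $n$, and $C_n(\eta)=C^{(1)}_n(\eta)+C^{(2)}_n(\eta)$. Then for every $M>0$, $$\limsup_{\eta\to\infty}\limsup_{n\to\infty}\frac1\tau\log P\Big(C_n(\eta)>\frac{2M\tau}{\eta}\Big)\le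 -C(M),$$ for some constants $C(M)$ satisfying $\lim_{M\to\infty}C(M)=\infty$. *)

theory Defs
  imports "HOL-Probability.Probability" "HOL-Library.Extended_Nat"
begin

definition coordk :: "nat \<Rightarrow> real \<times> real \<Rightarrow> real" where
  "coordk k z = (if k = 1 then fst z else snd z)"

definition onB :: "real \<Rightarrow> nat \<Rightarrow> real \<times> real \<Rightarrow> bool" where
  "onB \<eta> k z \<longleftrightarrow> (\<exists>a::int. coordk k z = \<eta> * (real_of_int a + 1/2))"

text \<open>crossT s eta k j is the crossing time T_(j+1) of the path s (infimum of the empty set = infinity).\<close>
fun crossT :: "(nat \<Rightarrow> real \<times> real) \<Rightarrow> real \<Rightarrow> nat \<Rightarrow> nat \<Rightarrow> enat" where
  "crossT s \<eta> k 0 =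
     (if \<exists>m>0. onB \<eta> k (s m) then enat (LEAST m. m > 0 \<and> onB \<eta> k (s m)) else \<infinity>)"
| "crossT s \<eta> k (Suc j) =
     (case crossT s \<eta> k j of
        \<infinity> \<Rightarrow> \<infinity>
      | enat t \<Rightarrow>
          (if \<exists>m>t. onB \<eta> k (s m) \<and> coordk k (s m) \<noteq> coordk k (s t)
           then enat (LEAST m. m > t \<and> onB \<eta> k (s m) \<and> coordk k (s m) \<noteq> coordk k (s t))
           else \<infinity>))"

definition crossings :: "(nat \<Rightarrow> real \<times> real) \<Rightarrow> real \<Rightarrow> nat \<Rightarrow> nat \<Rightarrow> nat" where
  "crossings s \<eta> k n = card {j. crossT s \<eta> k j \<le> enat n}"

definition rwalk :: "real \<Rightarrow> (nat \<Rightarrow> 'a \<Rightarrow> int \<times> int) \<Rightarrow> nat \<Rightarrow> 'a \<Rightarrow> real \<times> real" where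
  "rwalk Tt Y m \<omega> =
     ((\<Sum>j\<in>{1..m}. real_of_int (fst (Y j \<omega>))) / sqrt Tt,
      (\<Sum>j\<in>{1..m}. real_of_int (snd (Y j \<omega>))) / sqrt Tt)"

definition Ctot :: "(nat \<Rightarrow> nat \<Rightarrow> 'a \<Rightarrow> int \<times> int) \<Rightarrow> real \<Rightarrow> nat \<Rightarrow> 'a \<Rightarrow> nat" where
  "Ctot X \<eta> n \<omega> =
     (\<Sum>k\<in>{1,2}. \<Sum>i\<in>{1,2}. crossings (\<lambda>m. rwalk (real n / ln (real n)) (X i) m \<omega>) \<eta> k n)"

definition elog :: "real \<Rightarrow> ereal" where
  "elog p = (if p = 0 then -\<infinity> else ereal (ln p))"

end

theory Submission
  imports Defs "HOL-Real_Asymp.Real_Asymp"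
begin

fun gr :: "(nat \<Rightarrow> int) \<Rightarrow> real \<Rightarrow> nat \<Rightarrow> int \<times> nat" where
  "gr \<xi> R 0 = (0, 0)"
| "gr \<xi> R (Suc t) = (if R \<le> \<bar>real_of_int (fst (gr \<xi> R t) + \<xi> (Suc t))\<bar>
      then (0, Suc (snd (gr \<xi> R t))) else (fst (gr \<xi> R t) + \<xi> (Suc t), snd (gr \<xi> R t)))"

lemma gr_cong: "(\<And>j. 1 \<le> j \<Longrightarrow> j \<le> t \<Longrightarrow> \<xi> j = \<xi>' j) \<Longrightarrow> gr \<xi> R t = gr \<xi>' R t"
  by (induction t) auto

lemma gr_Suc_mono: "snd (gr \<xi> R t) \<le> snd (gr \<xi> R (Suc t))"
  by auto

lemma gr_mono: "t \<le> t' \<Longrightarrow> snd (gr \<xi> R t) \<le> snd (gr \<xi> R t')"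
  by (induction t' rule: dec_induct) (auto intro: order_trans[OF _ gr_Suc_mono])

lemma gr_bound: "R > 0 \<Longrightarrow> \<bar>real_of_int (fst (gr \<xi> R t))\<bar> < R"
  by (induction t) auto

lemma gr_snd_le: "snd (gr \<xi> R t) \<le> t"
  by (induction t) auto

lemma gr_same: "t \<le> t' \<Longrightarrow> snd (gr \<xi> R t') = snd (gr \<xi> R t) \<Longrightarrow>
   fst (gr \<xi> R t') = fst (gr \<xi> R t) + (\<Sum>j\<in>{Suc t..t'}. \<xi> j)"
proof (induction t' rule: dec_induct)
  case base
  then show ?case by simp
next
  case (step m)
  have a: "snd (gr \<xi> R t) \<le> snd (gr \<xi> R m)" using gr_mono step(1) .
  have b: "snd (gr \<xi> R m) \<le> snd (gr \<xi> R (Suc m))" by (rule gr_Suc_mono)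
  have eq: "snd (gr \<xi> R m) = snd (gr \<xi> R t)" using a b step(4) by linarith
  have nr: "\<not> R \<le> \<bar>real_of_int (fst (gr \<xi> R m) + \<xi> (Suc m))\<bar>"
    using step(4) eq by (auto split: if_splits)
  have "fst (gr \<xi> R m) = fst (gr \<xi> R t) + (\<Sum>j\<in>{Suc t..m}. \<xi> j)" using step(3) eq by simp
  moreover have "{Suc t..Suc m} = insert (Suc m) {Suc t..m}" using step(1) by auto
  ultimately show ?case using nr by simp
qed

lemma gr_incr:
  assumes "u \<le> v" "R > 0" "2 * R \<le> \<bar>real_of_int (\<Sum>j\<in>{Suc u..v}. \<xi> j)\<bar>"
  shows "snd (gr \<xi> R u) < snd (gr \<xi> R v)"
proof (rule ccontr)
  assume "\<not> ?thesis"
  then have "snd (gr \<xi> R v) = snd (gr \<xi> R u)" using gr_mono[OF assms(1), of \<xi> R] by linarith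
  from gr_same[OF assms(1) this] have "fst (gr \<xi> R v) = fst (gr \<xi> R u) + (\<Sum>j\<in>{Suc u..v}. \<xi> j)" .
  then have "real_of_int (\<Sum>j\<in>{Suc u..v}. \<xi> j) = real_of_int (fst (gr \<xi> R v)) - real_of_int (fst (gr \<xi> R u))"
    by simp
  then show False using gr_bound[OF assms(2), of \<xi> u] gr_bound[OF assms(2), of \<xi> v] assms(3) by linarith
qed

lemma gr_chain:
  assumes "R > 0" "\<And>j. j < K \<Longrightarrow> tt j < tt (Suc j) \<and> 2 * R \<le> \<bar>real_of_int (\<Sum>i\<in>{Suc (tt j)..tt (Suc j)}. \<xi> i)\<bar>"
  shows "K \<le> snd (gr \<xi> R (tt K))"
  using assms(2)
proof (induction K)
  case 0 then show ?case by simp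
next
  case (Suc K)
  have "K \<le> snd (gr \<xi> R (tt K))" using Suc by auto
  moreover have "snd (gr \<xi> R (tt K)) < snd (gr \<xi> R (tt (Suc K)))"
    using Suc.prems[of K] by (intro gr_incr[OF _ assms(1)]) auto
  ultimately show ?case by linarith
qed

lemma crossT_0: "crossT s \<eta> k 0 = enat t \<Longrightarrow> 0 < t \<and> onB \<eta> k (s t)"
proof -
  assume a: "crossT s \<eta> k 0 = enat t"
  then have ex: "\<exists>m>0. onB \<eta> k (s m)" by (auto split: if_splits)
  then have t: "t = (LEAST m. m > 0 \<and> onB \<eta> k (s m))" using a by auto
  from ex obtain m where "m > 0 \<and> onB \<eta> k (s m)" by auto
  from LeastI[of "\<lambda>m. m > 0 \<and> onB \<eta> k (s m)", OF this] show ?thesis unfolding t .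
qed

lemma crossT_Suc: "crossT s \<eta> k (Suc j) = enat t' \<Longrightarrow>
   \<exists>t. crossT s \<eta> k j = enat t \<and> t < t' \<and> onB \<eta> k (s t') \<and> coordk k (s t') \<noteq> coordk k (s t)"
proof -
  assume a: "crossT s \<eta> k (Suc j) = enat t'"
  show ?thesis
  proof (cases "crossT s \<eta> k j")
    case (enat t)
    let ?P = "\<lambda>m. m > t \<and> onB \<eta> k (s m) \<and> coordk k (s m) \<noteq> coordk k (s t)"
    have ex: "\<exists>m. ?P m" using a enat by (auto split: if_splits)
    then have t': "t' = (LEAST m. ?P m)" using a enat by auto
    from ex obtain m where "?P m" by auto
    from LeastI[of ?P, OF this] have "?P t'" unfolding t' .
    then show ?thesis using enat by auto
  next
    case infinity
    then show ?thesis using a by simp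
  qed
qed

lemma crossT_le_mono: "crossT s \<eta> k j \<le> enat n \<Longrightarrow> i \<le> j \<Longrightarrow> crossT s \<eta> k i \<le> enat n"
proof (induction j)
  case 0 then show ?case by simp
next
  case (Suc j)
  show ?case
  proof (cases "i = Suc j")
    case True then show ?thesis using Suc by simp
  next
    case False
    obtain t' where t': "crossT s \<eta> k (Suc j) = enat t'" using Suc.prems(1)
      by (cases "crossT s \<eta> k (Suc j)") auto
    from crossT_Suc[OF t'] obtain t where "crossT s \<eta> k j = enat t" "t < t'" by auto
    then have "crossT s \<eta> k j \<le> enat n" using Suc.prems(1) t' by simp
    then show ?thesis using Suc False by simp
  qed
qed

lemma crossings_ge: "Suc K \<le> crossings s \<eta> k n \<Longrightarrow> crossT s \<eta> k K \<le> enat n"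
proof (rule ccontr)
  assume a: "Suc K \<le> crossings s \<eta> k n" and b: "\<not> crossT s \<eta> k K \<le> enat n"
  have "{j. crossT s \<eta> k j \<le> enat n} \<subseteq> {..<K}"
  proof
    fix j assume "j \<in> {j. crossT s \<eta> k j \<le> enat n}"
    then have "crossT s \<eta> k j \<le> enat n" by simp
    then show "j \<in> {..<K}" using b crossT_le_mono[of s \<eta> k j n K] by (cases "K \<le> j") auto
  qed
  then have "crossings s \<eta> k n \<le> K" unfolding crossings_def
    using card_mono[of "{..<K}"] by fastforce
  then show False using a by simp
qed

lemma onB_diff: "\<eta> > 0 \<Longrightarrow> onB \<eta> k z \<Longrightarrow> onB \<eta> k w \<Longrightarrow> coordk k z \<noteq> coordk k w \<Longrightarrow>
   \<eta> \<le> \<bar>coordk k z - coordk k w\<bar>"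
proof -
  assume e: "\<eta> > 0" and z: "onB \<eta> k z" and w: "onB \<eta> k w" and ne: "coordk k z \<noteq> coordk k w"
  from z obtain a :: int where a: "coordk k z = \<eta> * (real_of_int a + 1/2)" unfolding onB_def by auto
  from w obtain c :: int where c: "coordk k w = \<eta> * (real_of_int c + 1/2)" unfolding onB_def by auto
  have "a \<noteq> c" using a c ne by auto
  then have "0 < \<bar>a - c\<bar>" by simp
  then have "1 \<le> \<bar>a - c\<bar>" by simp
  then have "1 \<le> \<bar>real_of_int a - real_of_int c\<bar>"
  proof -
    have "real_of_int 1 \<le> real_of_int \<bar>a - c\<bar>" using \<open>1 \<le> \<bar>a - c\<bar>\<close> by (simp only: of_int_le_iff)
    then show ?thesis by simp
  qed
  have "coordk k z - coordk k w = \<eta> * (real_of_int a - real_of_int c)" using a c by (simp add: algebra_simps)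
  then have "\<bar>coordk k z - coordk k w\<bar> = \<eta> * \<bar>real_of_int a - real_of_int c\<bar>" using e by (simp add: abs_mult)
  moreover have "\<eta> * 1 \<le> \<eta> * \<bar>real_of_int a - real_of_int c\<bar>"
    using \<open>1 \<le> \<bar>real_of_int a - real_of_int c\<bar>\<close> e by (intro mult_left_mono) auto
  ultimately show ?thesis by simp
qed

lemma crossings_times:
  assumes "Suc K \<le> crossings s \<eta> k n"
  shows "\<exists>tt. tt K \<le> n \<and> (\<forall>j\<le>K. onB \<eta> k (s (tt j))) \<and>
     (\<forall>j<K. tt j < tt (Suc j) \<and> coordk k (s (tt (Suc j))) \<noteq> coordk k (s (tt j)))"
proof -
  have le: "\<And>j. j \<le> K \<Longrightarrow> crossT s \<eta> k j \<le> enat n"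
    using crossings_ge[OF assms] crossT_le_mono by blast
  define tt where "tt j = the_enat (crossT s \<eta> k j)" for j
  have tt: "\<And>j. j \<le> K \<Longrightarrow> crossT s \<eta> k j = enat (tt j)"
  proof -
    fix j assume "j \<le> K"
    then obtain m where "crossT s \<eta> k j = enat m" using le enat_ile by blast
    then show "crossT s \<eta> k j = enat (tt j)" unfolding tt_def by simp
  qed
  have "tt K \<le> n" using tt[of K] le[of K] by simp
  moreover have "\<forall>j\<le>K. onB \<eta> k (s (tt j))"
  proof (intro allI impI)
    fix j assume "j \<le> K"
    show "onB \<eta> k (s (tt j))"
    proof (cases j)
      case 0
      then show ?thesis using crossT_0[of s \<eta> k "tt j"] tt[OF \<open>j \<le> K\<close>] by simp
    next
      case (Suc i)
      then show ?thesis using crossT_Suc[of s \<eta> k i "tt j"] tt[OF \<open>j \<le> K\<close>] by blast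
    qed
  qed
  moreover have "\<forall>j<K. tt j < tt (Suc j) \<and> coordk k (s (tt (Suc j))) \<noteq> coordk k (s (tt j))"
  proof (intro allI impI)
    fix j assume j: "j < K"
    from j have "Suc j \<le> K" "j \<le> K" by auto
    from crossT_Suc[OF tt[OF this(1)]] tt[OF this(2)] show "tt j < tt (Suc j) \<and> coordk k (s (tt (Suc j))) \<noteq> coordk k (s (tt j))"
      by auto
  qed
  ultimately show ?thesis by blast
qed

definition cint :: "nat \<Rightarrow> int \<times> int \<Rightarrow> int" where
  "cint k p = (if k = 1 then fst p else snd p)"

lemma coord_rwalk: "coordk k (rwalk Tt Y m \<omega>) = real_of_int (\<Sum>j\<in>{1..m}. cint k (Y j \<omega>)) / sqrt Tt"
  unfolding coordk_def rwalk_def cint_def by (cases "k = 1") auto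

lemma sum_split_ivl: "u \<le> v \<Longrightarrow> (\<Sum>j\<in>{1..v}. f j) = (\<Sum>j\<in>{1..u}. f j) + (\<Sum>j\<in>{Suc u..v}. (f j :: int))"
proof (induction v rule: dec_induct)
  case base then show ?case by simp
next
  case (step m)
  have a: "{1..Suc m} = insert (Suc m) {1..m}" by auto
  have b: "{Suc u..Suc m} = insert (Suc m) {Suc u..m}" using step(1) by auto
  show ?case unfolding a b using step by simp
qed

lemma cross_to_gr:
  assumes Tt: "Tt > 0" and eta: "\<eta> > 0"
    and c: "Suc K \<le> crossings (\<lambda>m. rwalk Tt Y m \<omega>) \<eta> k n"
  shows "K \<le> snd (gr (\<lambda>j. cint k (Y j \<omega>)) (\<eta> * sqrt Tt / 2) n)"
proof -
  let ?s = "\<lambda>m. rwalk Tt Y m \<omega>"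
  let ?\<xi> = "\<lambda>j. cint k (Y j \<omega>)"
  let ?R = "\<eta> * sqrt Tt / 2"
  from crossings_times[OF c] obtain tt where tK: "tt K \<le> n"
    and on: "\<forall>j\<le>K. onB \<eta> k (?s (tt j))"
    and inc: "\<forall>j<K. tt j < tt (Suc j) \<and> coordk k (?s (tt (Suc j))) \<noteq> coordk k (?s (tt j))" by blast
  have sq: "sqrt Tt > 0" using Tt by simp
  have R: "?R > 0" using sq eta by simp
  have ch: "tt j < tt (Suc j) \<and> 2 * ?R \<le> \<bar>real_of_int (\<Sum>i\<in>{Suc (tt j)..tt (Suc j)}. ?\<xi> i)\<bar>" if j: "j < K" for j
  proof -
    have lt: "tt j < tt (Suc j)" using inc j by auto
    have "\<eta> \<le> \<bar>coordk k (?s (tt (Suc j))) - coordk k (?s (tt j))\<bar>"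
      using onB_diff[OF eta, of k "?s (tt (Suc j))" "?s (tt j)"] on inc j by auto
    also have "coordk k (?s (tt (Suc j))) - coordk k (?s (tt j)) = real_of_int (\<Sum>i\<in>{Suc (tt j)..tt (Suc j)}. ?\<xi> i) / sqrt Tt"
      unfolding coord_rwalk using sum_split_ivl[of "tt j" "tt (Suc j)" ?\<xi>] lt
      by (simp add: diff_divide_distrib[symmetric])
    finally have "\<eta> \<le> \<bar>real_of_int (\<Sum>i\<in>{Suc (tt j)..tt (Suc j)}. ?\<xi> i)\<bar> / sqrt Tt"
      using sq by (simp only: abs_divide abs_of_pos)
    then have "\<eta> * sqrt Tt \<le> \<bar>real_of_int (\<Sum>i\<in>{Suc (tt j)..tt (Suc j)}. ?\<xi> i)\<bar>"
      using sq by (simp add: pos_le_divide_eq)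
    then show ?thesis using lt by simp
  qed
  have "K \<le> snd (gr ?\<xi> ?R (tt K))" using gr_chain[where tt=tt and \<xi>="?\<xi>" and R="?R" and K=K] R ch by blast
  also have "\<dots> \<le> snd (gr ?\<xi> ?R n)" by (rule gr_mono[OF tK])
  finally show ?thesis .
qed

lemma Ctot_split:
  assumes "real (Ctot X \<eta> n \<omega>) > 4 * x"
  shows "\<exists>i\<in>{1,2}. \<exists>k\<in>{1,2}. real (crossings (\<lambda>m. rwalk (real n / ln (real n)) (X i) m \<omega>) \<eta> k n) > x"
proof (rule ccontr)
  assume "\<not> ?thesis"
  then have "\<forall>i\<in>{1,2}. \<forall>k\<in>{1,2}. real (crossings (\<lambda>m. rwalk (real n / ln (real n)) (X i) m \<omega>) \<eta> k n) \<le> x"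
    by (auto simp: not_less)
  then have "real (Ctot X \<eta> n \<omega>) \<le> 4 * x" unfolding Ctot_def by simp
  then show False using assms by simp
qed

lemma cosh_mono_abs: "\<bar>x\<bar> \<le> \<bar>y\<bar> \<Longrightarrow> cosh (x::real) \<le> cosh y"
  using cosh_real_nonneg_le_iff[of "\<bar>x\<bar>" "\<bar>y\<bar>"] by simp

lemma cosh_exp_split: "cosh ((th::real) * (x + z)) = exp (th * x) / 2 * exp (th * z) + exp (- th * x) / 2 * exp (- th * z)"
  by (simp add: cosh_def exp_add[symmetric] algebra_simps)

lemma T3core:
  fixes M :: "'a measure" and Y :: "'i \<Rightarrow> 'a \<Rightarrow> 'b::countable" and idx :: "nat \<Rightarrow> 'i" and g :: "'b \<Rightarrow> int"
  assumes P: "prob_space M"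
    and ind: "prob_space.indep_vars M (\<lambda>_. count_space UNIV) Y I"
    and idxI: "\<And>j. 1 \<le> j \<Longrightarrow> idx j \<in> I" and inj: "inj_on idx {1..}"
    and gB: "\<And>y. \<bar>real_of_int (g y)\<bar> \<le> B"
    and R: "R > 0"
    and mgf1: "\<And>j. 1 \<le> j \<Longrightarrow> (\<integral>\<omega>. exp (th * real_of_int (g (Y (idx j) \<omega>))) \<partial>M) \<le> \<mu>"
    and mgf2: "\<And>j. 1 \<le> j \<Longrightarrow> (\<integral>\<omega>. exp (- th * real_of_int (g (Y (idx j) \<omega>))) \<partial>M) \<le> \<mu>"
  shows "measure M {\<omega> \<in> space M. K \<le> snd (gr (\<lambda>j. g (Y (idx j) \<omega>)) R n)} \<le> \<mu> ^ n / cosh (th * R) ^ K"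
proof -
  interpret prob_space M by (rule P)
  define st where "st t \<omega> = gr (\<lambda>j. g (Y (idx j) \<omega>)) R t" for t \<omega>
  define A where "A t = idx ` {1..t}" for t
  define F where "F t f = gr (\<lambda>j. if j \<in> {1..t} then g (f (idx j)) else 0) R t" for t and f :: "'i \<Rightarrow> 'b"
  have st_eq: "st t \<omega> = F t (restrict (\<lambda>i. Y i \<omega>) (A t))" for t \<omega>
    unfolding st_def F_def A_def by (rule gr_cong) auto
  have Ymeas: "\<And>i. i \<in> I \<Longrightarrow> Y i \<in> measurable M (count_space UNIV)"
    using ind unfolding indep_vars_def by auto
  have AI: "A t \<subseteq> I" for t unfolding A_def using idxI by auto
  have PiMc: "PiM (A t) (\<lambda>_. count_space (UNIV :: 'b set)) = count_space (PiE (A t) (\<lambda>_. UNIV))" for t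
    by (rule count_space_PiM_finite) (auto simp: A_def)
  have PiMc1: "PiM {idx (Suc t)} (\<lambda>_. count_space UNIV) = count_space (PiE {idx (Suc t)} (\<lambda>_. UNIV :: 'b set))" for t
    by (rule count_space_PiM_finite) auto
  have rmeas: "(\<lambda>\<omega>. restrict (\<lambda>i. Y i \<omega>) (A t)) \<in> measurable M (PiM (A t) (\<lambda>_. count_space UNIV))" for t
    using AI Ymeas by (intro measurable_restrict) auto
  have stmeas: "(\<lambda>\<omega>. G (st t \<omega>)) \<in> borel_measurable M" for t and G :: "int \<times> nat \<Rightarrow> real"
  proof -
    have "(\<lambda>f. G (F t f)) \<in> measurable (PiM (A t) (\<lambda>_. count_space UNIV)) borel"
      unfolding PiMc by simp
    from measurable_compose[OF rmeas this] show ?thesis unfolding st_eq .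
  qed
  have zmeas: "(\<lambda>\<omega>. G (g (Y (idx j) \<omega>))) \<in> borel_measurable M" if "1 \<le> j" for j and G :: "int \<Rightarrow> real"
    using measurable_compose[OF Ymeas[OF idxI[OF that]], of "\<lambda>y. G (g y)" borel] by simp
  have indep: "indep_var borel (\<lambda>\<omega>. U (st t \<omega>)) borel (\<lambda>\<omega>. V (g (Y (idx (Suc t)) \<omega>)))"
    for t and U :: "int \<times> nat \<Rightarrow> real" and V :: "int \<Rightarrow> real"
  proof -
    have disj: "A t \<inter> {idx (Suc t)} = {}"
      unfolding A_def using inj_on_image_mem_iff[OF inj, of "Suc t" "{1..t}"] by auto
    have iv: "indep_var (PiM (A t) (\<lambda>_. count_space UNIV)) (\<lambda>\<omega>. restrict (\<lambda>i. Y i \<omega>) (A t))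
       (PiM {idx (Suc t)} (\<lambda>_. count_space UNIV)) (\<lambda>\<omega>. restrict (\<lambda>i. Y i \<omega>) {idx (Suc t)})"
      by (rule indep_var_restrict[OF ind disj AI]) (use idxI in auto)
    have m1: "(\<lambda>f. U (F t f)) \<in> measurable (PiM (A t) (\<lambda>_. count_space UNIV)) borel"
      unfolding PiMc by simp
    have m2: "(\<lambda>f. V (g (f (idx (Suc t))))) \<in> measurable (PiM {idx (Suc t)} (\<lambda>_. count_space UNIV)) borel"
      unfolding PiMc1 by simp
    from indep_var_compose[OF iv m1 m2] show ?thesis
      by (simp add: o_def st_eq)
  qed
  define a where "a = cosh (th * R)"
  have a1: "1 \<le> a" unfolding a_def by (rule cosh_real_ge_1)
  define \<Phi> where "\<Phi> t \<omega> = cosh (th * real_of_int (fst (st t \<omega>))) * a ^ snd (st t \<omega>)" for t \<omega>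
  have \<Phi>meas: "\<Phi> t \<in> borel_measurable M" for t
    unfolding \<Phi>_def using stmeas[of "\<lambda>p. cosh (th * real_of_int (fst p)) * a ^ snd p" t] by simp
  have \<Phi>bnd: "0 \<le> \<Phi> t \<omega> \<and> \<Phi> t \<omega> \<le> a ^ Suc t" for t \<omega>
  proof -
    have "\<bar>real_of_int (fst (st t \<omega>))\<bar> < R" unfolding st_def by (rule gr_bound[OF R])
    then have "\<bar>th * real_of_int (fst (st t \<omega>))\<bar> \<le> \<bar>th * R\<bar>" using R
      by (simp add: abs_mult mult_left_mono)
    then have c: "cosh (th * real_of_int (fst (st t \<omega>))) \<le> a" unfolding a_def by (rule cosh_mono_abs)
    have "snd (st t \<omega>) \<le> t" unfolding st_def by (rule gr_snd_le)
    then have p: "a ^ snd (st t \<omega>) \<le> a ^ t" using a1 by (rule power_increasing)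
    have "\<Phi> t \<omega> \<le> a * a ^ t" unfolding \<Phi>_def using c p a1
      by (intro mult_mono) auto
    moreover have "0 \<le> \<Phi> t \<omega>" unfolding \<Phi>_def using a1 by (intro mult_nonneg_nonneg) auto
    ultimately show ?thesis by simp
  qed
  have \<Phi>int: "integrable M (\<Phi> t)" for t
    by (rule integrable_const_bound[where B="a ^ Suc t"]) (use \<Phi>bnd \<Phi>meas in auto)
  have "0 \<le> (\<integral>\<omega>. exp (th * real_of_int (g (Y (idx 1) \<omega>))) \<partial>M)"
    by (intro Bochner_Integration.integral_nonneg) simp
  then have \<mu>0: "0 \<le> \<mu>" using mgf1[of 1] by linarith
  have step: "(\<integral>\<omega>. \<Phi> (Suc t) \<omega> \<partial>M) \<le> \<mu> * (\<integral>\<omega>. \<Phi> t \<omega> \<partial>M)" for t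
  proof -
    define z where "z \<omega> = real_of_int (g (Y (idx (Suc t)) \<omega>))" for \<omega>
    define x where "x \<omega> = real_of_int (fst (st t \<omega>))" for \<omega>
    define U1 where "U1 \<omega> = exp (th * x \<omega>) / 2 * a ^ snd (st t \<omega>)" for \<omega>
    define U2 where "U2 \<omega> = exp (- th * x \<omega>) / 2 * a ^ snd (st t \<omega>)" for \<omega>
    define E1 where "E1 \<omega> = exp (th * z \<omega>)" for \<omega>
    define E2 where "E2 \<omega> = exp (- th * z \<omega>)" for \<omega>
    have pw: "\<Phi> (Suc t) \<omega> \<le> U1 \<omega> * E1 \<omega> + U2 \<omega> * E2 \<omega>" for \<omega>
    proof -
      have sS: "st (Suc t) \<omega> = (if R \<le> \<bar>x \<omega> + z \<omega>\<bar> then (0, Suc (snd (st t \<omega>)))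
                 else (fst (st t \<omega>) + g (Y (idx (Suc t)) \<omega>), snd (st t \<omega>)))"
        unfolding st_def x_def z_def by simp
      have eq: "U1 \<omega> * E1 \<omega> + U2 \<omega> * E2 \<omega> = cosh (th * (x \<omega> + z \<omega>)) * a ^ snd (st t \<omega>)"
        unfolding U1_def U2_def E1_def E2_def cosh_exp_split by (simp add: algebra_simps)
      show ?thesis
      proof (cases "R \<le> \<bar>x \<omega> + z \<omega>\<bar>")
        case True
        then have "\<bar>th * R\<bar> \<le> \<bar>th * (x \<omega> + z \<omega>)\<bar>" using R
          by (simp add: abs_mult mult_left_mono)
        then have "a \<le> cosh (th * (x \<omega> + z \<omega>))" unfolding a_def by (rule cosh_mono_abs)
        then have "a * a ^ snd (st t \<omega>) \<le> cosh (th * (x \<omega> + z \<omega>)) * a ^ snd (st t \<omega>)"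
          using a1 by (intro mult_right_mono) auto
        then show ?thesis unfolding eq \<Phi>_def sS using True by simp
      next
        case False
        then show ?thesis unfolding eq \<Phi>_def sS by (simp add: x_def z_def)
      qed
    qed
    have U1m: "U1 \<in> borel_measurable M" unfolding U1_def x_def
      using stmeas[of "\<lambda>p. exp (th * real_of_int (fst p)) / 2 * a ^ snd p" t] by simp
    have U2m: "U2 \<in> borel_measurable M" unfolding U2_def x_def
      using stmeas[of "\<lambda>p. exp (- th * real_of_int (fst p)) / 2 * a ^ snd p" t] by simp
    have E1m: "E1 \<in> borel_measurable M" unfolding E1_def z_def
      using zmeas[of "Suc t" "\<lambda>y. exp (th * real_of_int y)"] by simp
    have E2m: "E2 \<in> borel_measurable M" unfolding E2_def z_def
      using zmeas[of "Suc t" "\<lambda>y. exp (- th * real_of_int y)"] by simp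
    have xb: "\<bar>x \<omega>\<bar> \<le> R" for \<omega> unfolding x_def st_def using gr_bound[OF R] less_imp_le by blast
    have zb: "\<bar>z \<omega>\<bar> \<le> B" for \<omega> unfolding z_def by (rule gB)
    have eb: "exp (c * y) \<le> exp (\<bar>c\<bar> * D)" if "\<bar>y\<bar> \<le> D" for c y D :: real
    proof -
      have "c * y \<le> \<bar>c * y\<bar>" by (rule abs_ge_self)
      also have "\<dots> = \<bar>c\<bar> * \<bar>y\<bar>" by (rule abs_mult)
      also have "\<dots> \<le> \<bar>c\<bar> * D" using that by (intro mult_left_mono) auto
      finally show ?thesis by simp
    qed
    have sb: "a ^ snd (st t \<omega>) \<le> a ^ t" for \<omega>
      using a1 gr_snd_le unfolding st_def by (intro power_increasing) auto
    have U1b: "norm (U1 \<omega>) \<le> exp (\<bar>th\<bar> * R) / 2 * a ^ t" for \<omega>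
    proof -
      have "U1 \<omega> \<le> exp (\<bar>th\<bar> * R) / 2 * a ^ t" unfolding U1_def
        using eb[OF xb, of th \<omega>] sb[of \<omega>] a1 by (intro mult_mono) auto
      moreover have "0 \<le> U1 \<omega>" unfolding U1_def using a1 by auto
      ultimately show ?thesis by simp
    qed
    have U2b: "norm (U2 \<omega>) \<le> exp (\<bar>- th\<bar> * R) / 2 * a ^ t" for \<omega>
    proof -
      have "U2 \<omega> \<le> exp (\<bar>- th\<bar> * R) / 2 * a ^ t" unfolding U2_def
        using eb[OF xb, of "- th" \<omega>] sb[of \<omega>] a1 by (intro mult_mono) auto
      moreover have "0 \<le> U2 \<omega>" unfolding U2_def using a1 by auto
      ultimately show ?thesis by simp
    qed
    have U1i: "integrable M U1" by (rule integrable_const_bound[where B="exp (\<bar>th\<bar> * R) / 2 * a ^ t"]) (use U1b U1m in auto)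
    have U2i: "integrable M U2" by (rule integrable_const_bound[where B="exp (\<bar>- th\<bar> * R) / 2 * a ^ t"]) (use U2b U2m in auto)
    have E1i: "integrable M E1" by (rule integrable_const_bound[where B="exp (\<bar>th\<bar> * B)"]) (use eb[OF zb] E1m in \<open>auto simp: E1_def\<close>)
    have E2i: "integrable M E2" by (rule integrable_const_bound[where B="exp (\<bar>- th\<bar> * B)"]) (use eb[OF zb, of "- th"] E2m in \<open>auto simp: E2_def\<close>)
    have ind1: "indep_var borel U1 borel E1"
      using indep[of "\<lambda>p. exp (th * real_of_int (fst p)) / 2 * a ^ snd p" t "\<lambda>y. exp (th * real_of_int y)"]
      unfolding U1_def E1_def x_def z_def by simp
    have ind2: "indep_var borel U2 borel E2"
      using indep[of "\<lambda>p. exp (- th * real_of_int (fst p)) / 2 * a ^ snd p" t "\<lambda>y. exp (- th * real_of_int y)"]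
      unfolding U2_def E2_def x_def z_def by simp
    have P1i: "integrable M (\<lambda>\<omega>. U1 \<omega> * E1 \<omega>)" by (rule indep_var_integrable[OF ind1 U1i E1i])
    have P2i: "integrable M (\<lambda>\<omega>. U2 \<omega> * E2 \<omega>)" by (rule indep_var_integrable[OF ind2 U2i E2i])
    have "(\<integral>\<omega>. \<Phi> (Suc t) \<omega> \<partial>M) \<le> (\<integral>\<omega>. U1 \<omega> * E1 \<omega> + U2 \<omega> * E2 \<omega> \<partial>M)"
      by (intro integral_mono \<Phi>int Bochner_Integration.integrable_add P1i P2i pw)
    also have "\<dots> = (\<integral>\<omega>. U1 \<omega> * E1 \<omega> \<partial>M) + (\<integral>\<omega>. U2 \<omega> * E2 \<omega> \<partial>M)"
      by (rule Bochner_Integration.integral_add[OF P1i P2i])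
    also have "\<dots> = (\<integral>\<omega>. U1 \<omega> \<partial>M) * (\<integral>\<omega>. E1 \<omega> \<partial>M) + (\<integral>\<omega>. U2 \<omega> \<partial>M) * (\<integral>\<omega>. E2 \<omega> \<partial>M)"
      using indep_var_lebesgue_integral[OF ind1 U1i E1i] indep_var_lebesgue_integral[OF ind2 U2i E2i] by simp
    also have "\<dots> \<le> (\<integral>\<omega>. U1 \<omega> \<partial>M) * \<mu> + (\<integral>\<omega>. U2 \<omega> \<partial>M) * \<mu>"
    proof (intro add_mono mult_left_mono)
      show "(\<integral>\<omega>. E1 \<omega> \<partial>M) \<le> \<mu>" unfolding E1_def z_def using mgf1[of "Suc t"] by simp
      show "(\<integral>\<omega>. E2 \<omega> \<partial>M) \<le> \<mu>" unfolding E2_def z_def using mgf2[of "Suc t"] by simp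
      show "0 \<le> (\<integral>\<omega>. U1 \<omega> \<partial>M)" using a1 by (intro Bochner_Integration.integral_nonneg) (auto simp: U1_def)
      show "0 \<le> (\<integral>\<omega>. U2 \<omega> \<partial>M)" using a1 by (intro Bochner_Integration.integral_nonneg) (auto simp: U2_def)
    qed
    also have "\<dots> = \<mu> * (\<integral>\<omega>. U1 \<omega> + U2 \<omega> \<partial>M)"
      using Bochner_Integration.integral_add[OF U1i U2i] by (simp add: algebra_simps)
    also have "(\<lambda>\<omega>. U1 \<omega> + U2 \<omega>) = \<Phi> t"
      by (rule ext) (simp add: U1_def U2_def \<Phi>_def x_def cosh_def algebra_simps add_divide_distrib)
    finally show ?thesis .
  qed
  have E: "(\<integral>\<omega>. \<Phi> t \<omega> \<partial>M) \<le> \<mu> ^ t" for t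
  proof (induction t)
    case 0
    have "\<Phi> 0 = (\<lambda>_. 1)" by (rule ext) (simp add: \<Phi>_def st_def)
    then show ?case by simp
  next
    case (Suc t)
    have "(\<integral>\<omega>. \<Phi> (Suc t) \<omega> \<partial>M) \<le> \<mu> * (\<integral>\<omega>. \<Phi> t \<omega> \<partial>M)" by (rule step)
    also have "\<dots> \<le> \<mu> * \<mu> ^ t" using Suc \<mu>0 by (rule mult_left_mono)
    finally show ?case by simp
  qed
  have aK: "0 < a ^ K" using a1 by simp
  have sub: "{\<omega> \<in> space M. K \<le> snd (gr (\<lambda>j. g (Y (idx j) \<omega>)) R n)} \<subseteq> {\<omega> \<in> space M. a ^ K \<le> \<Phi> n \<omega>}"
  proof safe
    fix \<omega> assume "\<omega> \<in> space M" "K \<le> snd (gr (\<lambda>j. g (Y (idx j) \<omega>)) R n)"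
    then have "a ^ K \<le> a ^ snd (st n \<omega>)" unfolding st_def using a1 by (intro power_increasing) auto
    also have "\<dots> = 1 * a ^ snd (st n \<omega>)" by simp
    also have "\<dots> \<le> \<Phi> n \<omega>" unfolding \<Phi>_def using a1
      by (intro mult_right_mono cosh_real_ge_1) auto
    finally show "a ^ K \<le> \<Phi> n \<omega>" .
  qed
  have "measure M {\<omega> \<in> space M. K \<le> snd (gr (\<lambda>j. g (Y (idx j) \<omega>)) R n)} \<le> measure M {\<omega> \<in> space M. a ^ K \<le> \<Phi> n \<omega>}"
    by (rule finite_measure_mono[OF sub]) (use \<Phi>meas in measurable)
  also have "\<dots> \<le> (\<integral>\<omega>. \<Phi> n \<omega> \<partial>M) / a ^ K"
    by (rule integral_Markov_inequality_measure[OF \<Phi>int _ _ aK, where A="space M"]) (use \<Phi>bnd in auto)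
  also have "\<dots> \<le> \<mu> ^ n / a ^ K" using E[of n] aK by (intro divide_right_mono) auto
  finally show ?thesis unfolding a_def .
qed

lemma exp_quad: "\<bar>y\<bar> \<le> 1 \<Longrightarrow> exp (y::real) \<le> 1 + y + y\<^sup>2"
proof (cases "0 \<le> y")
  case True
  assume "\<bar>y\<bar> \<le> 1"
  then show ?thesis using exp_bound[of y] True by simp
next
  case False
  assume a: "\<bar>y\<bar> \<le> 1"
  define u where "u = - y"
  have u: "0 < u" "u \<le> 1" using False a unfolding u_def by auto
  have e: "1 + u \<le> exp u" by (rule exp_ge_add_one_self)
  have pos: "0 < 1 - u + u\<^sup>2" using u by (simp add: power2_eq_square) (smt (verit) mult_pos_pos)
  have "1 \<le> (1 + u) * (1 - u + u\<^sup>2)" using u by (simp add: power2_eq_square power3_eq_cube algebra_simps)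
  also have "\<dots> \<le> exp u * (1 - u + u\<^sup>2)" using e pos by (intro mult_right_mono) auto
  finally have "1 / exp u \<le> 1 - u + u\<^sup>2" by (simp add: divide_le_eq mult.commute)
  then show ?thesis unfolding u_def by (simp add: exp_minus inverse_eq_divide)
qed

lemma mgf_trunc:
  fixes M :: "'a measure" and \<xi> :: "'a \<Rightarrow> real"
  assumes P: "prob_space M" and m[measurable]: "\<xi> \<in> borel_measurable M"
    and i2: "integrable M (\<lambda>\<omega>. (\<xi> \<omega>)\<^sup>2)" and i3: "integrable M (\<lambda>\<omega>. \<bar>\<xi> \<omega>\<bar> ^ 3)"
    and i1: "integrable M \<xi>"
    and e1: "(\<integral>\<omega>. \<xi> \<omega> \<partial>M) = 0" and e2: "(\<integral>\<omega>. (\<xi> \<omega>)\<^sup>2 \<partial>M) = 1"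
    and b: "b > 0" and sb: "\<bar>s\<bar> * b \<le> 1"
  shows "(\<integral>\<omega>. exp (s * (if \<bar>\<xi> \<omega>\<bar> \<le> b then \<xi> \<omega> else 0)) \<partial>M)
           \<le> exp (\<bar>s\<bar> * (\<integral>\<omega>. \<bar>\<xi> \<omega>\<bar> ^ 3 \<partial>M) / b\<^sup>2 + s\<^sup>2)"
proof -
  interpret prob_space M by (rule P)
  define \<zeta> where "\<zeta> \<omega> = (if \<bar>\<xi> \<omega>\<bar> \<le> b then \<xi> \<omega> else 0)" for \<omega>
  have zm[measurable]: "\<zeta> \<in> borel_measurable M" unfolding \<zeta>_def by measurable
  have zb: "\<bar>\<zeta> \<omega>\<bar> \<le> b" for \<omega> unfolding \<zeta>_def using b by auto
  have szb: "\<bar>s * \<zeta> \<omega>\<bar> \<le> 1" for \<omega>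
  proof -
    have "\<bar>s * \<zeta> \<omega>\<bar> = \<bar>s\<bar> * \<bar>\<zeta> \<omega>\<bar>" by (rule abs_mult)
    also have "\<dots> \<le> \<bar>s\<bar> * b" using zb by (intro mult_left_mono) auto
    finally show ?thesis using sb by simp
  qed
  have zi: "integrable M \<zeta>" by (rule integrable_const_bound[where B=b]) (use zb in auto)
  have zb2: "(\<zeta> \<omega>)\<^sup>2 \<le> b\<^sup>2" for \<omega>
    using power_mono[OF zb[of \<omega>] abs_ge_zero, of 2] by simp
  have z2i: "integrable M (\<lambda>\<omega>. (\<zeta> \<omega>)\<^sup>2)"
    by (rule integrable_const_bound[where B="b\<^sup>2"]) (use zb2 in auto)
  have ei: "integrable M (\<lambda>\<omega>. exp (s * \<zeta> \<omega>))"
  proof (rule integrable_const_bound[where B="exp 1"])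
    show "AE x in M. norm (exp (s * \<zeta> x)) \<le> exp 1"
    proof (rule AE_I2)
      fix x show "norm (exp (s * \<zeta> x)) \<le> exp 1" using szb[of x] by simp
    qed
  qed simp
  have pw: "exp (s * \<zeta> \<omega>) \<le> 1 + s * \<zeta> \<omega> + s\<^sup>2 * (\<zeta> \<omega>)\<^sup>2" for \<omega>
    using exp_quad[OF szb[of \<omega>]] by (simp add: power_mult_distrib)
  have "(\<integral>\<omega>. exp (s * \<zeta> \<omega>) \<partial>M) \<le> (\<integral>\<omega>. 1 + s * \<zeta> \<omega> + s\<^sup>2 * (\<zeta> \<omega>)\<^sup>2 \<partial>M)"
    by (intro integral_mono ei pw Bochner_Integration.integrable_add integrable_mult_right zi z2i) simp
  also have "\<dots> = 1 + s * (\<integral>\<omega>. \<zeta> \<omega> \<partial>M) + s\<^sup>2 * (\<integral>\<omega>. (\<zeta> \<omega>)\<^sup>2 \<partial>M)"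
    using zi z2i prob_space.prob_space[OF P] by (simp add: Bochner_Integration.integral_add integrable_mult_right)
  also have "\<dots> \<le> 1 + \<bar>s\<bar> * ((\<integral>\<omega>. \<bar>\<xi> \<omega>\<bar> ^ 3 \<partial>M) / b\<^sup>2) + s\<^sup>2"
  proof -
    have d: "\<bar>\<zeta> \<omega> - \<xi> \<omega>\<bar> \<le> \<bar>\<xi> \<omega>\<bar> ^ 3 / b\<^sup>2" for \<omega>
    proof (cases "\<bar>\<xi> \<omega>\<bar> \<le> b")
      case True then show ?thesis unfolding \<zeta>_def using b by simp
    next
      case False
      then have "b\<^sup>2 \<le> \<bar>\<xi> \<omega>\<bar>\<^sup>2" using b by (intro power_mono) auto
      then have "b\<^sup>2 * \<bar>\<xi> \<omega>\<bar> \<le> \<bar>\<xi> \<omega>\<bar>\<^sup>2 * \<bar>\<xi> \<omega>\<bar>" by (intro mult_right_mono) auto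
      then have "\<bar>\<xi> \<omega>\<bar> \<le> \<bar>\<xi> \<omega>\<bar> ^ 3 / b\<^sup>2" using b
        by (simp add: pos_le_divide_eq power2_eq_square power3_eq_cube mult.commute mult.left_commute)
      then show ?thesis unfolding \<zeta>_def using False by simp
    qed
    have "\<bar>(\<integral>\<omega>. \<zeta> \<omega> \<partial>M)\<bar> = \<bar>(\<integral>\<omega>. \<zeta> \<omega> - \<xi> \<omega> \<partial>M)\<bar>"
      using zi i1 e1 by (simp add: Bochner_Integration.integral_diff)
    also have "\<dots> \<le> (\<integral>\<omega>. \<bar>\<zeta> \<omega> - \<xi> \<omega>\<bar> \<partial>M)" by (rule integral_abs_bound)
    also have "\<dots> \<le> (\<integral>\<omega>. \<bar>\<xi> \<omega>\<bar> ^ 3 / b\<^sup>2 \<partial>M)"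
      by (intro integral_mono d Bochner_Integration.integrable_abs Bochner_Integration.integrable_diff zi i1 integrable_divide i3)
    also have "\<dots> = (\<integral>\<omega>. \<bar>\<xi> \<omega>\<bar> ^ 3 \<partial>M) / b\<^sup>2" by simp
    finally have A: "\<bar>(\<integral>\<omega>. \<zeta> \<omega> \<partial>M)\<bar> \<le> (\<integral>\<omega>. \<bar>\<xi> \<omega>\<bar> ^ 3 \<partial>M) / b\<^sup>2" .
    have "s * (\<integral>\<omega>. \<zeta> \<omega> \<partial>M) \<le> \<bar>s\<bar> * \<bar>(\<integral>\<omega>. \<zeta> \<omega> \<partial>M)\<bar>" by (metis abs_ge_self abs_mult)
    also have "\<dots> \<le> \<bar>s\<bar> * ((\<integral>\<omega>. \<bar>\<xi> \<omega>\<bar> ^ 3 \<partial>M) / b\<^sup>2)" using A by (intro mult_left_mono) auto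
    finally have B: "s * (\<integral>\<omega>. \<zeta> \<omega> \<partial>M) \<le> \<bar>s\<bar> * ((\<integral>\<omega>. \<bar>\<xi> \<omega>\<bar> ^ 3 \<partial>M) / b\<^sup>2)" .
    have "(\<integral>\<omega>. (\<zeta> \<omega>)\<^sup>2 \<partial>M) \<le> (\<integral>\<omega>. (\<xi> \<omega>)\<^sup>2 \<partial>M)"
      by (intro integral_mono z2i i2) (simp add: \<zeta>_def)
    then have "s\<^sup>2 * (\<integral>\<omega>. (\<zeta> \<omega>)\<^sup>2 \<partial>M) \<le> s\<^sup>2" using e2 by (simp add: mult_left_le)
    with B show ?thesis by linarith
  qed
  also have "\<dots> \<le> exp (\<bar>s\<bar> * (\<integral>\<omega>. \<bar>\<xi> \<omega>\<bar> ^ 3 \<partial>M) / b\<^sup>2 + s\<^sup>2)"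
    using exp_ge_add_one_self[of "\<bar>s\<bar> * (\<integral>\<omega>. \<bar>\<xi> \<omega>\<bar> ^ 3 \<partial>M) / b\<^sup>2 + s\<^sup>2"] by (simp add: add.assoc)
  finally show ?thesis unfolding \<zeta>_def .
qed

lemma ident_integral:
  fixes M :: "'a measure" and X1 Xj :: "'a \<Rightarrow> 'b" and F :: "'b \<Rightarrow> real"
  assumes m1: "X1 \<in> measurable M (count_space UNIV)" and mj: "Xj \<in> measurable M (count_space UNIV)"
    and d: "distr M (count_space UNIV) Xj = distr M (count_space UNIV) X1"
  shows "(\<integral>\<omega>. F (Xj \<omega>) \<partial>M) = (\<integral>\<omega>. F (X1 \<omega>) \<partial>M)"
    and "integrable M (\<lambda>\<omega>. F (Xj \<omega>)) \<longleftrightarrow> integrable M (\<lambda>\<omega>. F (X1 \<omega>))"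
proof -
  have f: "F \<in> borel_measurable (count_space UNIV)" by simp
  show "(\<integral>\<omega>. F (Xj \<omega>) \<partial>M) = (\<integral>\<omega>. F (X1 \<omega>) \<partial>M)"
    using integral_distr[OF mj f] integral_distr[OF m1 f] d by simp
  show "integrable M (\<lambda>\<omega>. F (Xj \<omega>)) \<longleftrightarrow> integrable M (\<lambda>\<omega>. F (X1 \<omega>))"
    using integrable_distr_eq[OF mj f] integrable_distr_eq[OF m1 f] d by simp
qed

lemma H_powr:
  fixes H :: "real \<Rightarrow> real"
  assumes mono: "mono_on {0..} H" and pos: "\<And>x. x \<ge> 0 \<Longrightarrow> H x > 0"
    and growth: "filterlim (\<lambda>n::nat. ln (H (real n)) / ln (real n)) at_top sequentially"
  shows "\<exists>x0\<ge>1. \<forall>x\<ge>x0. x powr L \<le> H x"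
proof -
  define L' where "L' = max L 0"
  have "eventually (\<lambda>n. 2 * L' \<le> ln (H (real n)) / ln (real n)) sequentially"
    using growth unfolding filterlim_at_top by blast
  then obtain N where N: "\<And>n. n \<ge> N \<Longrightarrow> 2 * L' \<le> ln (H (real n)) / ln (real n)"
    unfolding eventually_sequentially by blast
  define x0 where "x0 = real (max N 4)"
  have "x0 \<ge> 1" unfolding x0_def by simp
  moreover have "x powr L \<le> H x" if x: "x \<ge> x0" for x
  proof -
    define m where "m = nat \<lfloor>x\<rfloor>"
    have x4: "x \<ge> 4" using x unfolding x0_def by simp
    have "int (max N 4) \<le> \<lfloor>x\<rfloor>" using x unfolding x0_def by (simp add: le_floor_iff)
    from nat_mono[OF this] have mN: "m \<ge> max N 4" unfolding m_def by simp
    have mx: "real m \<le> x" unfolding m_def using x4 by simp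
    have mx1: "x - 1 \<le> real m" unfolding m_def using x4 by linarith
    have m4: "real m \<ge> 4" using mN by simp
    have lnm: "ln (real m) > 0" using m4 by simp
    have "2 * L' \<le> ln (H (real m)) / ln (real m)" using N mN by simp
    then have "2 * L' * ln (real m) \<le> ln (H (real m))" using lnm by (simp add: le_divide_eq)
    then have "exp (2 * L' * ln (real m)) \<le> exp (ln (H (real m)))" by simp
    then have "exp (2 * L' * ln (real m)) \<le> H (real m)" using pos[of "real m"] by simp
    moreover have "exp (2 * L' * ln (real m)) = (real m ^ 2) powr L'"
      using m4 by (simp add: powr_def ln_mult power2_eq_square algebra_simps)
    ultimately have A: "(real m ^ 2) powr L' \<le> H (real m)" by simp
    have "0 \<le> x * (x - 3)" using x4 by simp
    moreover have "(x - 1) ^ 2 = x * (x - 3) + 1 + x" by (simp add: power2_eq_square algebra_simps)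
    ultimately have "x \<le> (x - 1) ^ 2" by linarith
    also have "\<dots> \<le> real m ^ 2" using mx1 x4 by (intro power_mono) auto
    finally have xm: "x \<le> real m ^ 2" .
    have "x powr L \<le> x powr L'" unfolding L'_def using x4 by (intro powr_mono) auto
    also have "\<dots> \<le> (real m ^ 2) powr L'" using xm x4 unfolding L'_def by (intro powr_mono2) auto
    also have "\<dots> \<le> H (real m)" by (rule A)
    also have "\<dots> \<le> H x" using mono mx x4 by (intro mono_onD[OF mono]) auto
    finally show ?thesis .
  qed
  ultimately show ?thesis by blast
qed

lemma abs_le_nrm: "\<bar>real_of_int (cint k p)\<bar> \<le> norm (real_of_int (fst p), real_of_int (snd p))"
proof -
  have a: "\<bar>u\<bar> \<le> sqrt (u\<^sup>2 + v\<^sup>2)" for u v :: real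
  proof -
    have "sqrt (u\<^sup>2) \<le> sqrt (u\<^sup>2 + v\<^sup>2)" by (rule real_sqrt_le_mono) simp
    then show ?thesis by simp
  qed
  have b: "\<bar>v\<bar> \<le> sqrt (u\<^sup>2 + v\<^sup>2)" for u v :: real
  proof -
    have "sqrt (v\<^sup>2) \<le> sqrt (u\<^sup>2 + v\<^sup>2)" by (rule real_sqrt_le_mono) simp
    then show ?thesis by simp
  qed
  show ?thesis unfolding cint_def norm_Pair using a b by auto
qed

lemma bigjump:
  fixes M :: "'a measure" and Xi :: "nat \<Rightarrow> 'a \<Rightarrow> int \<times> int" and H :: "real \<Rightarrow> real"
  assumes P: "prob_space M"
    and meas: "\<And>j. j \<ge> 1 \<Longrightarrow> Xi j \<in> measurable M (count_space UNIV)"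
    and ident: "\<And>j. j \<ge> 1 \<Longrightarrow> distr M (count_space UNIV) (Xi j) = distr M (count_space UNIV) (Xi 1)"
    and mono: "mono_on {0..} H" and pos: "\<And>x. x \<ge> 0 \<Longrightarrow> H x > 0"
    and Hint: "integrable M (\<lambda>\<omega>. H (norm (real_of_int (fst (Xi 1 \<omega>)), real_of_int (snd (Xi 1 \<omega>)))))"
    and b: "b \<ge> 0"
  shows "measure M {\<omega> \<in> space M. \<exists>j\<in>{1..n}. b < \<bar>real_of_int (cint k (Xi j \<omega>))\<bar>}
     \<le> real n * (\<integral>\<omega>. H (norm (real_of_int (fst (Xi 1 \<omega>)), real_of_int (snd (Xi 1 \<omega>)))) \<partial>M) / H b"
proof -
  interpret prob_space M by (rule P)
  define nrm where "nrm p = norm (real_of_int (fst p), real_of_int (snd p))" for p :: "int \<times> int"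
  define Bj where "Bj j = {\<omega> \<in> space M. H b \<le> H (nrm (Xi j \<omega>))}" for j
  have Hb: "H b > 0" using pos b by simp
  have hm: "(\<lambda>\<omega>. H (nrm (Xi j \<omega>))) \<in> borel_measurable M" if "j \<ge> 1" for j
    using measurable_compose[OF meas[OF that], of "\<lambda>p. H (nrm p)" borel] by simp
  have Bs: "Bj j \<in> sets M" if "j \<ge> 1" for j
    unfolding Bj_def using hm[OF that] by measurable
  have sub: "{\<omega> \<in> space M. \<exists>j\<in>{1..n}. b < \<bar>real_of_int (cint k (Xi j \<omega>))\<bar>} \<subseteq> (\<Union>j\<in>{1..n}. Bj j)"
  proof safe
    fix \<omega> j assume \<omega>: "\<omega> \<in> space M" and j: "j \<in> {1..n}" and lt: "b < \<bar>real_of_int (cint k (Xi j \<omega>))\<bar>"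
    have "b \<le> nrm (Xi j \<omega>)" using lt abs_le_nrm[of k "Xi j \<omega>"] unfolding nrm_def by linarith
    then have "H b \<le> H (nrm (Xi j \<omega>))" using b by (intro mono_onD[OF mono]) (auto simp: nrm_def)
    then show "\<omega> \<in> (\<Union>j\<in>{1..n}. Bj j)" using \<omega> j unfolding Bj_def by auto
  qed
  have Bm: "measure M (Bj j) \<le> (\<integral>\<omega>. H (nrm (Xi 1 \<omega>)) \<partial>M) / H b" if j: "j \<in> {1..n}" for j
  proof -
    have j1: "j \<ge> 1" using j by simp
    have ie: "(\<integral>\<omega>. H (nrm (Xi j \<omega>)) \<partial>M) = (\<integral>\<omega>. H (nrm (Xi 1 \<omega>)) \<partial>M)"
      and ii: "integrable M (\<lambda>\<omega>. H (nrm (Xi j \<omega>))) \<longleftrightarrow> integrable M (\<lambda>\<omega>. H (nrm (Xi 1 \<omega>)))"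
      using ident_integral[OF meas[of 1] meas[OF j1] ident[OF j1], of "\<lambda>p. H (nrm p)"] by auto
    have int: "integrable M (\<lambda>\<omega>. H (nrm (Xi j \<omega>)))" using ii Hint unfolding nrm_def by simp
    have nn: "0 \<le> H (nrm (Xi j \<omega>))" for \<omega>
      using pos[of "nrm (Xi j \<omega>)"] unfolding nrm_def by simp
    have "measure M (Bj j) \<le> (\<integral>\<omega>. H (nrm (Xi j \<omega>)) \<partial>M) / H b"
      unfolding Bj_def
      by (rule integral_Markov_inequality_measure[OF int _ _ Hb, where A="space M"])
         (use nn in auto)
    then show ?thesis using ie by simp
  qed
  have "measure M {\<omega> \<in> space M. \<exists>j\<in>{1..n}. b < \<bar>real_of_int (cint k (Xi j \<omega>))\<bar>} \<le> measure M (\<Union>j\<in>{1..n}. Bj j)"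
    by (rule finite_measure_mono[OF sub]) (use Bs in auto)
  also have "\<dots> \<le> (\<Sum>j\<in>{1..n}. measure M (Bj j))"
    by (rule finite_measure_subadditive_finite) (use Bs in auto)
  also have "\<dots> \<le> (\<Sum>j\<in>{1..n}. (\<integral>\<omega>. H (nrm (Xi 1 \<omega>)) \<partial>M) / H b)"
    by (rule sum_mono) (rule Bm)
  also have "\<dots> = real n * (\<integral>\<omega>. H (nrm (Xi 1 \<omega>)) \<partial>M) / H b" by simp
  finally show ?thesis unfolding nrm_def .
qed

definition tr :: "real \<Rightarrow> int \<Rightarrow> int" where
  "tr b v = (if \<bar>real_of_int v\<bar> \<le> b then v else 0)"

lemma tr_real: "real_of_int (tr b v) = (if \<bar>real_of_int v\<bar> \<le> b then real_of_int v else 0)"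
  by (simp add: tr_def)

lemma combo:
  fixes M :: "'a measure" and X :: "nat \<Rightarrow> nat \<Rightarrow> 'a \<Rightarrow> int \<times> int"
  assumes P: "prob_space M"
    and meas: "\<And>i j. i \<in> {1,2} \<Longrightarrow> j \<ge> 1 \<Longrightarrow> X i j \<in> measurable M (count_space UNIV)"
    and indep: "prob_space.indep_vars M (\<lambda>_. count_space UNIV) (\<lambda>(i,j). X i j) ({1,2} \<times> {1..})"
    and ident: "\<And>i j. i \<in> {1,2} \<Longrightarrow> j \<ge> 1 \<Longrightarrow>
                  distr M (count_space UNIV) (X i j) = distr M (count_space UNIV) (X i 1)"
    and i: "i \<in> {1,2}"
    and i1: "integrable M (\<lambda>\<omega>. real_of_int (cint k (X i 1 \<omega>)))"
    and i2: "integrable M (\<lambda>\<omega>. (real_of_int (cint k (X i 1 \<omega>)))\<^sup>2)"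
    and i3: "integrable M (\<lambda>\<omega>. \<bar>real_of_int (cint k (X i 1 \<omega>))\<bar> ^ 3)"
    and e1: "(\<integral>\<omega>. real_of_int (cint k (X i 1 \<omega>)) \<partial>M) = 0"
    and e2: "(\<integral>\<omega>. (real_of_int (cint k (X i 1 \<omega>)))\<^sup>2 \<partial>M) = 1"
    and b: "b > 0" and th: "th > 0" and thb: "th * b \<le> 1" and R: "R > 0"
    and m3: "(\<integral>\<omega>. \<bar>real_of_int (cint k (X i 1 \<omega>))\<bar> ^ 3 \<partial>M) \<le> m3"
  shows "measure M {\<omega> \<in> space M. K \<le> snd (gr (\<lambda>j. tr b (cint k (X i j \<omega>))) R n)}
           \<le> exp (th * m3 / b\<^sup>2 + th\<^sup>2) ^ n / cosh (th * R) ^ K"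
proof -
  define \<xi> where "\<xi> \<omega> = real_of_int (cint k (X i 1 \<omega>))" for \<omega>
  have \<xi>m: "\<xi> \<in> borel_measurable M" unfolding \<xi>_def
    using measurable_compose[OF meas[OF i, of 1], of "\<lambda>p. real_of_int (cint k p)" borel] by simp
  have mgf: "(\<integral>\<omega>. exp (s * real_of_int (tr b (cint k (X i j \<omega>)))) \<partial>M) \<le> exp (th * m3 / b\<^sup>2 + th\<^sup>2)"
    if j: "j \<ge> 1" and s: "\<bar>s\<bar> = th" for j s
  proof -
    have "(\<integral>\<omega>. exp (s * real_of_int (tr b (cint k (X i j \<omega>)))) \<partial>M)
        = (\<integral>\<omega>. exp (s * real_of_int (tr b (cint k (X i 1 \<omega>)))) \<partial>M)"
      using ident_integral(1)[OF meas[OF i, of 1] meas[OF i j] ident[OF i j],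
          of "\<lambda>p. exp (s * real_of_int (tr b (cint k p)))"] by simp
    also have "\<dots> = (\<integral>\<omega>. exp (s * (if \<bar>\<xi> \<omega>\<bar> \<le> b then \<xi> \<omega> else 0)) \<partial>M)"
      unfolding \<xi>_def tr_real ..
    also have "\<dots> \<le> exp (\<bar>s\<bar> * (\<integral>\<omega>. \<bar>\<xi> \<omega>\<bar> ^ 3 \<partial>M) / b\<^sup>2 + s\<^sup>2)"
      by (rule mgf_trunc[OF P \<xi>m]) (use i1 i2 i3 e1 e2 b thb s in \<open>simp_all add: \<xi>_def[abs_def]\<close>)
    also have "\<dots> \<le> exp (th * m3 / b\<^sup>2 + th\<^sup>2)"
    proof -
      have "th * (\<integral>\<omega>. \<bar>\<xi> \<omega>\<bar> ^ 3 \<partial>M) \<le> th * m3" using m3 th unfolding \<xi>_def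
        by (intro mult_left_mono) auto
      then have "th * (\<integral>\<omega>. \<bar>\<xi> \<omega>\<bar> ^ 3 \<partial>M) / b\<^sup>2 \<le> th * m3 / b\<^sup>2"
        by (intro divide_right_mono) auto
      moreover have "s\<^sup>2 = th\<^sup>2" using s by (metis power2_abs)
      ultimately show ?thesis using s by simp
    qed
    finally show ?thesis .
  qed
  have core: "measure M {\<omega> \<in> space M. K \<le> snd (gr (\<lambda>j. tr b (cint k ((\<lambda>(i,j). X i j) ((\<lambda>j. (i, j)) j) \<omega>))) R n)}
           \<le> exp (th * m3 / b\<^sup>2 + th\<^sup>2) ^ n / cosh (th * R) ^ K"
  proof (rule T3core[OF P indep, where B=b])
    show "\<And>j. 1 \<le> j \<Longrightarrow> (i, j) \<in> {1, 2} \<times> {1..}" using i by auto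
    show "inj_on (\<lambda>j. (i, j)) {1..}" by (auto simp: inj_on_def)
    show "\<And>y. \<bar>real_of_int (tr b (cint k y))\<bar> \<le> b" using b by (simp add: tr_real)
    show "0 < R" by (rule R)
    show "\<And>j. 1 \<le> j \<Longrightarrow> (\<integral>\<omega>. exp (th * real_of_int (tr b (cint k ((\<lambda>(i,j). X i j) (i, j) \<omega>)))) \<partial>M) \<le> exp (th * m3 / b\<^sup>2 + th\<^sup>2)"
      using mgf th by simp
    show "\<And>j. 1 \<le> j \<Longrightarrow> (\<integral>\<omega>. exp (- th * real_of_int (tr b (cint k ((\<lambda>(i,j). X i j) (i, j) \<omega>)))) \<partial>M) \<le> exp (th * m3 / b\<^sup>2 + th\<^sup>2)"
      using mgf[of _ "- th"] th by simp
  qed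
  then show ?thesis by simp
qed

lemma seqI: "eventually P (at_top :: real filter) \<Longrightarrow> eventually (\<lambda>N::nat. P (real N)) sequentially"
  using eventually_compose_filterlim[OF _ filterlim_real_sequentially] by blast

lemma AS1: "eventually (\<lambda>N::nat. real N * c / ((real N / ln (real N)) * sqrt (real N / ln (real N))) \<le> 1) sequentially"
proof -
  have "((\<lambda>n::real. n * c / ((n / ln n) * sqrt (n / ln n))) \<longlongrightarrow> 0) at_top" by real_asymp
  then have "eventually (\<lambda>n::real. n * c / ((n / ln n) * sqrt (n / ln n)) < 1) at_top"
    by (rule order_tendstoD) simp
  then show ?thesis by (rule seqI[OF eventually_mono]) simp
qed

lemma AS2: "c > 0 \<Longrightarrow> eventually (\<lambda>N::nat. real N powr (1/3) \<le> c * sqrt (real N / ln (real N))) sequentially"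
proof -
  assume c: "c > 0"
  have "eventually (\<lambda>n::real. n powr (1/3) \<le> c * sqrt (n / ln n)) at_top" using c by real_asymp
  then show ?thesis by (rule seqI)
qed

lemma AS3: "eventually (\<lambda>N::nat. x1 \<le> real N powr (1/3)) sequentially"
proof -
  have "filterlim (\<lambda>n::real. n powr (1/3)) at_top at_top" by real_asymp
  then have "eventually (\<lambda>n::real. x1 \<le> n powr (1/3)) at_top" unfolding filterlim_at_top by blast
  then show ?thesis by (rule seqI)
qed

lemma AS4: "\<beta> > 0 \<Longrightarrow> eventually (\<lambda>N::nat. e * real N powr (- \<beta>) + E / real N \<le> 1) sequentially"
proof -
  assume b: "\<beta> > 0"
  have "((\<lambda>N::nat. real N powr (- \<beta>)) \<longlongrightarrow> 0) sequentially"
    by (rule tendsto_neg_powr[OF _ filterlim_real_sequentially]) (use b in simp)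
  moreover have "((\<lambda>N::nat. 1 / real N) \<longlongrightarrow> 0) sequentially" by (rule lim_const_over_n)
  ultimately have "((\<lambda>N::nat. e * real N powr (- \<beta>) + E * (1 / real N)) \<longlongrightarrow> e * 0 + E * 0) sequentially"
    by (intro tendsto_intros)
  then have "eventually (\<lambda>N::nat. e * real N powr (- \<beta>) + E * (1 / real N) < 1) sequentially"
    by (rule order_tendstoD) simp
  then show ?thesis by eventually_elim simp
qed

lemma C_lim: "filterlim (\<lambda>x::real. x\<^sup>2 / 256) at_top at_top" by real_asymp

lemma numA:
  fixes N :: nat and Mc \<eta> m3 T sq lam th b R x :: real and K :: nat
  assumes N3: "real N \<ge> 3" and Mc: "Mc > 0" and eta: "\<eta> \<ge> 64 / Mc" and m3: "m3 \<ge> 0"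
    and T: "T = real N / ln (real N)" and sq: "sq = sqrt T" and lam: "lam = Mc / 8"
    and th: "th = lam / sq" and b: "b = sq / lam" and R: "R = \<eta> * sq / 2"
    and x: "x = Mc * ln (real N) / (2 * \<eta>)" and K: "K = nat \<lfloor>x\<rfloor>"
    and F2: "real N * (lam ^ 3 * m3) / (T * sq) \<le> 1"
  shows "exp (th * m3 / b\<^sup>2 + th\<^sup>2) ^ N / cosh (th * R) ^ K \<le> exp (1 + lam * \<eta> / 2) * real N powr (- (Mc\<^sup>2 / 128))"
proof -
  have lnN: "ln (real N) > 0" using N3 by simp
  have Npos: "real N > 0" using N3 by simp
  have Tpos: "T > 0" unfolding T using Npos lnN by simp
  have sqpos: "sq > 0" unfolding sq using Tpos by simp
  have sq2: "sq\<^sup>2 = T" unfolding sq using Tpos by simp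
  have NT: "real N / T = ln (real N)" unfolding T using Npos lnN by simp
  have lampos: "lam > 0" unfolding lam using Mc by simp
  have etapos: "\<eta> > 0" using eta Mc by (smt (verit) divide_pos_pos)
  have A1: "th * m3 / b\<^sup>2 = lam ^ 3 * m3 / (T * sq)"
    unfolding th b sq2[symmetric] using sqpos lampos by (simp add: field_simps power2_eq_square power3_eq_cube)
  have A2: "real N * th\<^sup>2 = lam\<^sup>2 * ln (real N)"
    unfolding th NT[symmetric] sq2[symmetric] using sqpos by (simp add: field_simps power2_eq_square)
  have E1: "real N * (th * m3 / b\<^sup>2 + th\<^sup>2) \<le> 1 + lam\<^sup>2 * ln (real N)"
    using F2 A1 A2 by (simp add: distrib_left)
  have y: "th * R = lam * \<eta> / 2" unfolding th R using sqpos by simp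
  have y4: "lam * \<eta> / 2 \<ge> 4"
  proof -
    have "Mc * \<eta> \<ge> 64" using eta Mc by (simp add: divide_le_eq mult.commute)
    then show ?thesis unfolding lam by simp
  qed
  define yy where "yy = lam * \<eta> / 2"
  have ln2: "ln (2::real) < 1" using ln_2_less_1 .
  have cb: "exp yy / 2 \<le> cosh yy" unfolding cosh_def by simp
  have "exp yy / 2 = exp (yy - ln 2)" by (simp add: exp_diff)
  then have cb2: "exp (yy - ln 2) \<le> cosh yy" using cb by simp
  have x0: "x \<ge> 0" unfolding x using Mc lnN etapos by simp
  have Kx: "real K \<ge> x - 1" unfolding K using x0 by linarith
  have "exp (yy - ln 2) ^ K \<le> cosh yy ^ K" using cb2 by (intro power_mono) auto
  then have cK: "exp (real K * (yy - ln 2)) \<le> cosh yy ^ K" by (simp add: exp_of_nat_mult)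
  have "exp (th * m3 / b\<^sup>2 + th\<^sup>2) ^ N = exp (real N * (th * m3 / b\<^sup>2 + th\<^sup>2))"
    by (simp add: exp_of_nat_mult)
  also have "\<dots> \<le> exp (1 + lam\<^sup>2 * ln (real N))" using E1 by simp
  finally have num: "exp (th * m3 / b\<^sup>2 + th\<^sup>2) ^ N \<le> exp (1 + lam\<^sup>2 * ln (real N))" .
  have "exp (th * m3 / b\<^sup>2 + th\<^sup>2) ^ N / cosh (th * R) ^ K \<le> exp (1 + lam\<^sup>2 * ln (real N)) / exp (real K * (yy - ln 2))"
    unfolding y yy_def[symmetric] using num cK by (intro frac_le) auto
  also have "\<dots> = exp (1 + lam\<^sup>2 * ln (real N) - real K * (yy - ln 2))" by (simp add: exp_diff)
  also have "\<dots> \<le> exp (1 + yy - (Mc\<^sup>2 / 128) * ln (real N))"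
  proof -
    have yl: "yy - ln 2 \<ge> 0" using y4 ln2 unfolding yy_def by simp
    have f1: "(x - 1) * (yy - ln 2) \<le> real K * (yy - ln 2)" using Kx yl by (intro mult_right_mono) auto
    have g1: "x * yy - x * ln 2 - yy + ln 2 \<le> real K * yy - real K * ln 2"
      using f1 by (simp add: algebra_simps)
    have f2: "x * yy = Mc\<^sup>2 * ln (real N) / 32" unfolding x yy_def lam using etapos
      by (simp add: field_simps power2_eq_square)
    have f3: "x \<le> Mc\<^sup>2 * ln (real N) / 128"
    proof -
      have "1 / \<eta> \<le> Mc / 64" using eta Mc etapos by (simp add: divide_le_eq field_simps)
      then have "Mc * ln (real N) / 2 * (1 / \<eta>) \<le> Mc * ln (real N) / 2 * (Mc / 64)"
        using Mc lnN by (intro mult_left_mono) auto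
      then show ?thesis unfolding x by (simp add: power2_eq_square mult.commute mult.left_commute)
    qed
    have f4: "x * ln 2 \<le> x" using x0 ln2 by (simp add: mult_left_le)
    have f5: "lam\<^sup>2 * ln (real N) = Mc\<^sup>2 * ln (real N) / 64" unfolding lam by (simp add: power2_eq_square)
    have f6: "ln (2::real) \<ge> 0" by simp
    have "1 + lam\<^sup>2 * ln (real N) - (real K * yy - real K * ln 2) \<le> 1 + yy - Mc\<^sup>2 * ln (real N) / 128"
      using g1 f2 f3 f4 f5 f6 by linarith
    then have "1 + lam\<^sup>2 * ln (real N) - real K * (yy - ln 2) \<le> 1 + yy - (Mc\<^sup>2 / 128) * ln (real N)"
      by (simp add: right_diff_distrib)
    then show ?thesis by simp
  qed
  also have "\<dots> = exp (1 + lam * \<eta> / 2) * real N powr (- (Mc\<^sup>2 / 128))"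
    unfolding yy_def powr_def using Npos by (simp add: exp_add[symmetric] exp_diff algebra_simps)
  finally show ?thesis .
qed

lemma T3meas:
  fixes M :: "'a measure" and Y :: "'i \<Rightarrow> 'a \<Rightarrow> 'b::countable" and idx :: "nat \<Rightarrow> 'i" and g :: "'b \<Rightarrow> int"
  assumes P: "prob_space M"
    and ind: "prob_space.indep_vars M (\<lambda>_. count_space UNIV) Y I"
    and idxI: "\<And>j. 1 \<le> j \<Longrightarrow> idx j \<in> I"
  shows "(\<lambda>\<omega>. gr (\<lambda>j. g (Y (idx j) \<omega>)) R t) \<in> measurable M (count_space UNIV)"
proof -
  interpret prob_space M by (rule P)
  define A where "A = idx ` {1..t}"
  define F where "F f = gr (\<lambda>j. if j \<in> {1..t} then g (f (idx j)) else 0) R t" for f :: "'i \<Rightarrow> 'b"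
  have st_eq: "gr (\<lambda>j. g (Y (idx j) \<omega>)) R t = F (restrict (\<lambda>i. Y i \<omega>) A)" for \<omega>
    unfolding F_def A_def by (rule gr_cong) auto
  have Ymeas: "\<And>i. i \<in> I \<Longrightarrow> Y i \<in> measurable M (count_space UNIV)"
    using ind unfolding indep_vars_def by auto
  have AI: "A \<subseteq> I" unfolding A_def using idxI by auto
  have PiMc: "PiM A (\<lambda>_. count_space (UNIV :: 'b set)) = count_space (PiE A (\<lambda>_. UNIV))"
    by (rule count_space_PiM_finite) (auto simp: A_def)
  have rmeas: "(\<lambda>\<omega>. restrict (\<lambda>i. Y i \<omega>) A) \<in> measurable M (PiM A (\<lambda>_. count_space UNIV))"
    using AI Ymeas by (intro measurable_restrict) auto
  have "F \<in> measurable (PiM A (\<lambda>_. count_space UNIV)) (count_space UNIV)"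
    unfolding PiMc by simp
  from measurable_compose[OF rmeas this] show ?thesis unfolding st_eq .
qed

theorem lemma3p4:
  fixes M :: "'a measure"
    and X :: "nat \<Rightarrow> nat \<Rightarrow> 'a \<Rightarrow> int \<times> int"
    and H :: "real \<Rightarrow> real"
  assumes P: "prob_space M"
    and meas: "\<And>i j. i \<in> {1,2} \<Longrightarrow> j \<ge> 1 \<Longrightarrow> X i j \<in> measurable M (count_space UNIV)"
    and indep: "prob_space.indep_vars M (\<lambda>_. count_space UNIV) (\<lambda>(i,j). X i j) ({1,2} \<times> {1..})"
    and ident: "\<And>i j. i \<in> {1,2} \<Longrightarrow> j \<ge> 1 \<Longrightarrow>
                  distr M (count_space UNIV) (X i j) = distr M (count_space UNIV) (X i 1)"
    and int1: "\<And>i. i \<in> {1,2} \<Longrightarrow> integrable M (\<lambda>\<omega>. real_of_int (fst (X i 1 \<omega>)))"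
    and int2: "\<And>i. i \<in> {1,2} \<Longrightarrow> integrable M (\<lambda>\<omega>. real_of_int (snd (X i 1 \<omega>)))"
    and int11: "\<And>i. i \<in> {1,2} \<Longrightarrow> integrable M (\<lambda>\<omega>. (real_of_int (fst (X i 1 \<omega>)))^2)"
    and int22: "\<And>i. i \<in> {1,2} \<Longrightarrow> integrable M (\<lambda>\<omega>. (real_of_int (snd (X i 1 \<omega>)))^2)"
    and int12: "\<And>i. i \<in> {1,2} \<Longrightarrow>
                  integrable M (\<lambda>\<omega>. real_of_int (fst (X i 1 \<omega>)) * real_of_int (snd (X i 1 \<omega>)))"
    and mean1: "\<And>i. i \<in> {1,2} \<Longrightarrow> (\<integral>\<omega>. real_of_int (fst (X i 1 \<omega>)) \<partial>M) = 0"
    and mean2: "\<And>i. i \<in> {1,2} \<Longrightarrow> (\<integral>\<omega>. real_of_int (snd (X i 1 \<omega>)) \<partial>M) = 0"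
    and cov11: "\<And>i. i \<in> {1,2} \<Longrightarrow> (\<integral>\<omega>. (real_of_int (fst (X i 1 \<omega>)))^2 \<partial>M) = 1"
    and cov22: "\<And>i. i \<in> {1,2} \<Longrightarrow> (\<integral>\<omega>. (real_of_int (snd (X i 1 \<omega>)))^2 \<partial>M) = 1"
    and cov12: "\<And>i. i \<in> {1,2} \<Longrightarrow>
                  (\<integral>\<omega>. real_of_int (fst (X i 1 \<omega>)) * real_of_int (snd (X i 1 \<omega>)) \<partial>M) = 0"
    and H_cont: "continuous_on {0..} H"
    and H_mono: "mono_on {0..} H"
    and H_pos: "\<And>x. x \<ge> 0 \<Longrightarrow> H x > 0"
    and H_growth: "filterlim (\<lambda>n::nat. ln (H (real n)) / ln (real n)) at_top sequentially"
    and H_mom: "\<And>i. i \<in> {1,2} \<Longrightarrow>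
                  integrable M (\<lambda>\<omega>. H (norm (real_of_int (fst (X i 1 \<omega>)), real_of_int (snd (X i 1 \<omega>)))))"
  shows "\<exists>C :: real \<Rightarrow> real. filterlim C at_top at_top \<and>
           (\<forall>Mc > 0. Limsup at_top (\<lambda>\<eta>::real. Limsup sequentially (\<lambda>n::nat.
              ereal (1 / ln (real n)) *
              elog (measure M {\<omega> \<in> space M. real (Ctot X \<eta> n \<omega>) > 2 * Mc * ln (real n) / \<eta>})))
            \<le> ereal (- C Mc))"
proof -
  interpret prob_space M by (rule P)
  have cmeas: "(\<lambda>\<omega>. G (X i j \<omega>)) \<in> borel_measurable M" if "i \<in> {1,2}" "j \<ge> 1" for i j and G :: "int \<times> int \<Rightarrow> real"
    using measurable_compose[OF meas[OF that], of G borel] by simp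
  have ci1: "integrable M (\<lambda>\<omega>. real_of_int (cint k (X i 1 \<omega>)))" if "i \<in> {1,2}" "k \<in> {1,2}" for i k
    using that int1 int2 by (auto simp: cint_def)
  have ci2: "integrable M (\<lambda>\<omega>. (real_of_int (cint k (X i 1 \<omega>)))\<^sup>2)" if "i \<in> {1,2}" "k \<in> {1,2}" for i k
    using that int11 int22 by (auto simp: cint_def)
  have ce1: "(\<integral>\<omega>. real_of_int (cint k (X i 1 \<omega>)) \<partial>M) = 0" if "i \<in> {1,2}" "k \<in> {1,2}" for i k
    using that mean1 mean2 by (auto simp: cint_def)
  have ce2: "(\<integral>\<omega>. (real_of_int (cint k (X i 1 \<omega>)))\<^sup>2 \<partial>M) = 1" if "i \<in> {1,2}" "k \<in> {1,2}" for i k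
    using that cov11 cov22 by (auto simp: cint_def)
  define nrm where "nrm p = norm (real_of_int (fst p), real_of_int (snd p))" for p :: "int \<times> int"
  have Hnn: "0 \<le> H (nrm p)" for p using H_pos[of "nrm p"] unfolding nrm_def by simp
  obtain x3 where x3: "x3 \<ge> 1" "\<And>x. x \<ge> x3 \<Longrightarrow> x powr 3 \<le> H x"
    using H_powr[OF H_mono H_pos H_growth, of 3] by blast
  have ci3: "integrable M (\<lambda>\<omega>. \<bar>real_of_int (cint k (X i 1 \<omega>))\<bar> ^ 3)" if i: "i \<in> {1,2}" for i k
  proof (rule Bochner_Integration.integrable_bound)
    show "integrable M (\<lambda>\<omega>. x3 ^ 3 + H (nrm (X i 1 \<omega>)))"
      using H_mom[OF i] unfolding nrm_def by (intro Bochner_Integration.integrable_add) auto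
    show "(\<lambda>\<omega>. \<bar>real_of_int (cint k (X i 1 \<omega>))\<bar> ^ 3) \<in> borel_measurable M"
      using cmeas[OF i, of 1 "\<lambda>p. \<bar>real_of_int (cint k p)\<bar> ^ 3"] by simp
    show "AE \<omega> in M. norm (\<bar>real_of_int (cint k (X i 1 \<omega>))\<bar> ^ 3) \<le> norm (x3 ^ 3 + H (nrm (X i 1 \<omega>)))"
    proof (rule AE_I2)
      fix \<omega>
      define c where "c = \<bar>real_of_int (cint k (X i 1 \<omega>))\<bar>"
      have c0: "c \<ge> 0" unfolding c_def by simp
      have cn: "c \<le> nrm (X i 1 \<omega>)" unfolding c_def nrm_def by (rule abs_le_nrm)
      have "c ^ 3 \<le> x3 ^ 3 + H (nrm (X i 1 \<omega>))"
      proof (cases "c \<ge> x3")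
        case True
        then have "c powr 3 \<le> H c" by (rule x3(2))
        also have "\<dots> \<le> H (nrm (X i 1 \<omega>))" using c0 cn by (intro mono_onD[OF H_mono]) auto
        finally have "c ^ 3 \<le> H (nrm (X i 1 \<omega>))" using c0 True x3(1) by (simp add: powr_realpow)
        then show ?thesis using x3(1) by (smt (verit) zero_le_power)
      next
        case False
        then have "c ^ 3 \<le> x3 ^ 3" using c0 by (intro power_mono) auto
        then show ?thesis using Hnn[of "X i 1 \<omega>"] by simp
      qed
      moreover have "0 \<le> x3 ^ 3 + H (nrm (X i 1 \<omega>))" using Hnn[of "X i 1 \<omega>"] x3(1) by simp
      ultimately show "norm (\<bar>real_of_int (cint k (X i 1 \<omega>))\<bar> ^ 3) \<le> norm (x3 ^ 3 + H (nrm (X i 1 \<omega>)))"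
        unfolding c_def by simp
    qed
  qed
  define m3f where "m3f i k = (\<integral>\<omega>. \<bar>real_of_int (cint k (X i 1 \<omega>))\<bar> ^ 3 \<partial>M)" for i k
  define m3 where "m3 = (\<Sum>i\<in>{1::nat,2}. \<Sum>k\<in>{1::nat,2}. m3f i k)"
  have m3f0: "0 \<le> m3f i k" for i k unfolding m3f_def by (intro Bochner_Integration.integral_nonneg) simp
  have m3ge: "m3f i k \<le> m3" if "i \<in> {1,2}" "k \<in> {1,2}" for i k
    using that m3f0 unfolding m3_def by (auto simp: add_increasing add_increasing2)
  have m30: "0 \<le> m3" unfolding m3_def using m3f0 by (simp add: sum_nonneg)
  define EHf where "EHf i = (\<integral>\<omega>. H (nrm (X i 1 \<omega>)) \<partial>M)" for i
  define EH where "EH = EHf 1 + EHf 2"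
  have EHf0: "0 \<le> EHf i" for i unfolding EHf_def using Hnn by (intro Bochner_Integration.integral_nonneg) simp
  have EHge: "EHf i \<le> EH" if "i \<in> {1,2}" for i using that EHf0 unfolding EH_def by auto
  show ?thesis
  proof (intro exI[of _ "\<lambda>x. x\<^sup>2 / 256"] conjI allI impI)
    show "filterlim (\<lambda>x::real. x\<^sup>2 / 256) at_top at_top" by (rule C_lim)
    fix Mc :: real assume Mc: "Mc > 0"
    define \<beta> where "\<beta> = Mc\<^sup>2 / 256"
    define lam where "lam = Mc / 8"
    have \<beta>0: "\<beta> > 0" unfolding \<beta>_def using Mc by simp
    have lam0: "lam > 0" unfolding lam_def using Mc by simp
    obtain x1 where x1: "x1 \<ge> 1" "\<And>x. x \<ge> x1 \<Longrightarrow> x powr (3 * (\<beta> + 2)) \<le> H x"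
      using H_powr[OF H_mono H_pos H_growth, of "3 * (\<beta> + 2)"] by blast
    have inner: "Limsup sequentially (\<lambda>n::nat. ereal (1 / ln (real n)) *
              elog (measure M {\<omega> \<in> space M. real (Ctot X \<eta> n \<omega>) > 2 * Mc * ln (real n) / \<eta>}))
            \<le> ereal (- (Mc\<^sup>2 / 256))" if eta: "\<eta> \<ge> 64 / Mc" for \<eta>
    proof (rule Limsup_bounded)
      have etapos: "\<eta> > 0" using eta Mc by (smt (verit) divide_pos_pos)
      have ev: "eventually (\<lambda>N::nat. real N \<ge> 3 \<and>
          real N * (lam ^ 3 * m3) / ((real N / ln (real N)) * sqrt (real N / ln (real N))) \<le> 1 \<and>
          real N powr (1/3) \<le> (1 / lam) * sqrt (real N / ln (real N)) \<and>
          x1 \<le> real N powr (1/3) \<and>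
          4 * exp (1 + lam * \<eta> / 2) * real N powr (- \<beta>) + 4 * EH / real N \<le> 1) sequentially"
        apply (intro eventually_conj)
        subgoal using eventually_ge_at_top[of "3::nat"] by eventually_elim simp
        subgoal by (rule AS1)
        subgoal by (rule AS2) (use lam0 in simp)
        subgoal by (rule AS3)
        subgoal by (rule AS4[OF \<beta>0])
        done
      show "eventually (\<lambda>n::nat. ereal (1 / ln (real n)) *
              elog (measure M {\<omega> \<in> space M. real (Ctot X \<eta> n \<omega>) > 2 * Mc * ln (real n) / \<eta>})
            \<le> ereal (- (Mc\<^sup>2 / 256))) sequentially"
        using ev
      proof eventually_elim
        case (elim N)
        then have N3: "real N \<ge> 3" and F2: "real N * (lam ^ 3 * m3) / ((real N / ln (real N)) * sqrt (real N / ln (real N))) \<le> 1"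
          and F3: "real N powr (1/3) \<le> (1 / lam) * sqrt (real N / ln (real N))"
          and F4: "x1 \<le> real N powr (1/3)"
          and F5: "4 * exp (1 + lam * \<eta> / 2) * real N powr (- \<beta>) + 4 * EH / real N \<le> 1" by auto
        define T where "T = real N / ln (real N)"
        define sq where "sq = sqrt T"
        define th where "th = lam / sq"
        define b where "b = sq / lam"
        define R where "R = \<eta> * sq / 2"
        define x where "x = Mc * ln (real N) / (2 * \<eta>)"
        define K where "K = nat \<lfloor>x\<rfloor>"
        define S where "S = {\<omega> \<in> space M. real (Ctot X \<eta> N \<omega>) > 2 * Mc * ln (real N) / \<eta>}"
        define A where "A i k = {\<omega> \<in> space M. K \<le> snd (gr (\<lambda>j. tr b (cint k (X i j \<omega>))) R N)}" for i k
        define BJ where "BJ i k = {\<omega> \<in> space M. \<exists>j\<in>{1..N}. b < \<bar>real_of_int (cint k (X i j \<omega>))\<bar>}" for i k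
        have lnN: "ln (real N) > 0" using N3 by simp
        have Npos: "real N > 0" using N3 by simp
        have Tpos: "T > 0" unfolding T_def using Npos lnN by simp
        have sqpos: "sq > 0" unfolding sq_def using Tpos by simp
        have bpos: "b > 0" unfolding b_def using sqpos lam0 by simp
        have thpos: "th > 0" unfolding th_def using sqpos lam0 by simp
        have thb: "th * b \<le> 1" unfolding th_def b_def using sqpos lam0 by simp
        have Rpos: "R > 0" unfolding R_def using sqpos etapos by simp
        have x0: "x \<ge> 0" unfolding x_def using Mc lnN etapos by simp
        have sq_eq: "sqrt (real N / ln (real N)) = sq" unfolding sq_def T_def ..
        have Kx1: "real K \<le> x" unfolding K_def using x0 by linarith
        have thr: "2 * Mc * ln (real N) / \<eta> = 4 * x" unfolding x_def by (simp add: field_simps)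
        have T'pos: "real N / ln (real N) > 0" using Tpos unfolding T_def .
        have sub: "S \<subseteq> (\<Union>p\<in>{1::nat,2}\<times>{1::nat,2}. A (fst p) (snd p) \<union> BJ (fst p) (snd p))"
        proof
          fix \<omega> assume \<omega>: "\<omega> \<in> S"
          then have \<omega>s: "\<omega> \<in> space M" and gt: "real (Ctot X \<eta> N \<omega>) > 4 * x" unfolding S_def thr by auto
          from Ctot_split[OF gt] obtain i k where i: "i \<in> {1,2}" and k: "k \<in> {1,2}"
            and c: "real (crossings (\<lambda>m. rwalk (real N / ln (real N)) (X i) m \<omega>) \<eta> k N) > x" by blast
          have "real K < real (crossings (\<lambda>m. rwalk (real N / ln (real N)) (X i) m \<omega>) \<eta> k N)"
            using c Kx1 by linarith
          then have "Suc K \<le> crossings (\<lambda>m. rwalk (real N / ln (real N)) (X i) m \<omega>) \<eta> k N" by simp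
          from cross_to_gr[OF T'pos etapos this]
          have g: "K \<le> snd (gr (\<lambda>j. cint k (X i j \<omega>)) R N)" unfolding R_def sq_eq .
          show "\<omega> \<in> (\<Union>p\<in>{1::nat,2}\<times>{1::nat,2}. A (fst p) (snd p) \<union> BJ (fst p) (snd p))"
          proof (cases "\<exists>j\<in>{1..N}. b < \<bar>real_of_int (cint k (X i j \<omega>))\<bar>")
            case True
            then have "\<omega> \<in> BJ i k" unfolding BJ_def using \<omega>s by auto
            then show ?thesis using i k by (intro UN_I[of "(i,k)"]) auto
          next
            case False
            then have "gr (\<lambda>j. tr b (cint k (X i j \<omega>))) R N = gr (\<lambda>j. cint k (X i j \<omega>)) R N"
              by (intro gr_cong) (auto simp: tr_def not_less)
            then have "\<omega> \<in> A i k" unfolding A_def using \<omega>s g by simp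
            then show ?thesis using i k by (intro UN_I[of "(i,k)"]) auto
          qed
        qed
        have Am: "A i k \<in> sets M" if i: "i \<in> {1,2}" for i k
        proof -
          note mm0 = T3meas[OF P indep, where idx="\<lambda>j. (i,j)" and g="\<lambda>p. tr b (cint k p)" and R=R and t=N]
          have mm: "(\<lambda>\<omega>. gr (\<lambda>j. tr b (cint k (X i j \<omega>))) R N) \<in> measurable M (count_space UNIV)"
            using mm0 i by simp
          have "A i k = (\<lambda>\<omega>. gr (\<lambda>j. tr b (cint k (X i j \<omega>))) R N) -` {p. K \<le> snd p} \<inter> space M"
            unfolding A_def by auto
          then show ?thesis using measurable_sets[OF mm, of "{p. K \<le> snd p}"] by simp
        qed
        have BJm: "BJ i k \<in> sets M" if i: "i \<in> {1,2}" for i k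
        proof -
          have "BJ i k = (\<Union>j\<in>{1..N}. {\<omega>\<in>space M. b < \<bar>real_of_int (cint k (X i j \<omega>))\<bar>})" unfolding BJ_def by auto
          moreover have "{\<omega>\<in>space M. b < \<bar>real_of_int (cint k (X i j \<omega>))\<bar>} \<in> sets M" if j: "j \<in> {1..N}" for j
          proof -
            have fm: "(\<lambda>\<omega>. \<bar>real_of_int (cint k (X i j \<omega>))\<bar>) \<in> borel_measurable M"
              using cmeas[OF i, of j "\<lambda>p. \<bar>real_of_int (cint k p)\<bar>"] j by simp
            have "{\<omega>\<in>space M. b < \<bar>real_of_int (cint k (X i j \<omega>))\<bar>} = (\<lambda>\<omega>. \<bar>real_of_int (cint k (X i j \<omega>))\<bar>) -` {b<..} \<inter> space M"
              by auto
            then show ?thesis using measurable_sets[OF fm, of "{b<..}"] by simp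
          qed
          ultimately show ?thesis by auto
        qed
        define e0 where "e0 = exp (1 + lam * \<eta> / 2)"
        have Hbpos: "H b > 0" using H_pos bpos by simp
        have each: "measure M (A i k \<union> BJ i k) \<le> e0 * real N powr (- (Mc\<^sup>2 / 128)) + real N * EH / H b"
          if i: "i \<in> {1,2}" and k: "k \<in> {1,2}" for i k
        proof -
          have m3i: "(\<integral>\<omega>. \<bar>real_of_int (cint k (X i 1 \<omega>))\<bar> ^ 3 \<partial>M) \<le> m3"
            using m3ge[OF i k] unfolding m3f_def .
          have "measure M (A i k) \<le> exp (th * m3 / b\<^sup>2 + th\<^sup>2) ^ N / cosh (th * R) ^ K"
            unfolding A_def
            by (rule combo[OF P meas indep ident i ci1[OF i k] ci2[OF i k] ci3[OF i] ce1[OF i k] ce2[OF i k] bpos thpos thb Rpos m3i]) auto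
          also have "\<dots> \<le> e0 * real N powr (- (Mc\<^sup>2 / 128))"
            unfolding e0_def
            by (rule numA[OF N3 Mc eta m30 T_def sq_def lam_def th_def b_def R_def x_def K_def])
               (use F2 in \<open>simp add: T_def sq_def\<close>)
          finally have a: "measure M (A i k) \<le> e0 * real N powr (- (Mc\<^sup>2 / 128))" .
          have "measure M (BJ i k) \<le> real N * EHf i / H b"
            unfolding BJ_def EHf_def nrm_def
            by (rule bigjump[where Xi="X i" and k=k and n=N and b=b, OF P meas[OF i] ident[OF i] H_mono H_pos H_mom[OF i]]) (simp_all add: less_imp_le[OF bpos])
          also have "\<dots> \<le> real N * EH / H b"
            using EHge[OF i] Hbpos by (intro divide_right_mono mult_left_mono) auto
          finally have bj: "measure M (BJ i k) \<le> real N * EH / H b" .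
          have "measure M (A i k \<union> BJ i k) \<le> measure M (A i k) + measure M (BJ i k)"
            by (rule measure_Un_le) (use Am[OF i] BJm[OF i] in auto)
          then show ?thesis using a bj by linarith
        qed
        have "measure M S \<le> measure M (\<Union>p\<in>{1::nat,2}\<times>{1::nat,2}. A (fst p) (snd p) \<union> BJ (fst p) (snd p))"
          by (rule finite_measure_mono[OF sub]) (use Am BJm in auto)
        also have "\<dots> \<le> (\<Sum>p\<in>{1::nat,2}\<times>{1::nat,2}. measure M (A (fst p) (snd p) \<union> BJ (fst p) (snd p)))"
          by (rule finite_measure_subadditive_finite) (use Am BJm in auto)
        also have "\<dots> \<le> (\<Sum>p\<in>{1::nat,2}\<times>{1::nat,2}. e0 * real N powr (- (Mc\<^sup>2 / 128)) + real N * EH / H b)"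
          by (rule sum_mono) (use each in auto)
        also have "\<dots> = 4 * (e0 * real N powr (- (Mc\<^sup>2 / 128)) + real N * EH / H b)" by simp
        finally have PS1: "measure M S \<le> 4 * (e0 * real N powr (- (Mc\<^sup>2 / 128)) + real N * EH / H b)" .
        have bge: "real N powr (1/3) \<le> b" using F3 unfolding b_def sq_def T_def by simp
        have Hb: "real N powr (\<beta> + 2) \<le> H b"
        proof -
          have "b \<ge> x1" using F4 bge by linarith
          then have "b powr (3 * (\<beta> + 2)) \<le> H b" by (rule x1(2))
          moreover have "(real N powr (1/3)) powr (3 * (\<beta> + 2)) \<le> b powr (3 * (\<beta> + 2))"
            using bge \<beta>0 by (intro powr_mono2) auto
          moreover have "(real N powr (1/3)) powr (3 * (\<beta> + 2)) = real N powr (\<beta> + 2)"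
          proof -
            have "1 / 3 * (3 * (\<beta> + 2)) = \<beta> + 2" by simp
            then show ?thesis by (simp only: powr_powr)
          qed
          ultimately show ?thesis by simp
        qed
        have NPpos: "real N powr (\<beta> + 2) > 0" using Npos by simp
        have "real N * EH / H b \<le> real N * EH / real N powr (\<beta> + 2)"
          using Hb NPpos EHf0[of 1] EHf0[of 2] Npos Hbpos unfolding EH_def
          by (intro divide_left_mono mult_nonneg_nonneg mult_pos_pos) auto
        also have "real N * EH / real N powr (\<beta> + 2) = real N powr (- \<beta>) * (EH / real N)"
        proof -
          have p1: "real N powr (\<beta> + 2) = real N powr \<beta> * (real N * real N)"
            using Npos by (simp add: powr_add powr_numeral power2_eq_square)
          have p2: "real N powr (- \<beta>) = 1 / real N powr \<beta>" by (rule powr_minus_divide)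
          have p3: "real N powr \<beta> > 0" using Npos by simp
          show ?thesis unfolding p1 p2 using p3 Npos by (simp add: field_simps)
        qed
        finally have bjb: "real N * EH / H b \<le> real N powr (- \<beta>) * (EH / real N)" .
        have e2: "real N powr (- (Mc\<^sup>2 / 128)) = real N powr (- \<beta>) * real N powr (- \<beta>)"
          unfolding \<beta>_def by (simp add: powr_add[symmetric])
        have "4 * (e0 * real N powr (- (Mc\<^sup>2 / 128)) + real N * EH / H b)
            \<le> 4 * (e0 * (real N powr (- \<beta>) * real N powr (- \<beta>)) + real N powr (- \<beta>) * (EH / real N))"
          using bjb unfolding e2 by simp
        also have "\<dots> = real N powr (- \<beta>) * (4 * e0 * real N powr (- \<beta>) + 4 * EH / real N)"
          by (simp add: algebra_simps)
        finally have "measure M S \<le> real N powr (- \<beta>) * (4 * e0 * real N powr (- \<beta>) + 4 * EH / real N)"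
          using PS1 by linarith
        also have "\<dots> \<le> real N powr (- \<beta>) * 1"
          using F5 unfolding e0_def by (intro mult_left_mono) auto
        finally have PS: "measure M S \<le> real N powr (- \<beta>)" by simp
        have goalS: "ereal (1 / ln (real N)) * elog (measure M S) \<le> ereal (- (Mc\<^sup>2 / 256))"
        proof (cases "measure M S = 0")
          case True
          then show ?thesis using lnN by (simp add: elog_def)
        next
          case False
          then have pp: "measure M S > 0" using measure_nonneg[of M S] by linarith
          have "ln (measure M S) \<le> ln (real N powr (- \<beta>))"
            using PS pp Npos by (subst ln_le_cancel_iff) auto
          also have "\<dots> = - \<beta> * ln (real N)" using Npos by (simp add: ln_powr)
          finally have "ln (measure M S) / ln (real N) \<le> - \<beta>" using lnN by (simp add: divide_le_eq)
          then show ?thesis using False unfolding elog_def \<beta>_def by simp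
        qed
        then show ?case unfolding S_def .
      qed
    qed
    show "Limsup at_top (\<lambda>\<eta>::real. Limsup sequentially (\<lambda>n::nat.
              ereal (1 / ln (real n)) *
              elog (measure M {\<omega> \<in> space M. real (Ctot X \<eta> n \<omega>) > 2 * Mc * ln (real n) / \<eta>})))
            \<le> ereal (- (Mc\<^sup>2 / 256))"
      by (rule Limsup_bounded, rule eventually_mono[OF eventually_ge_at_top[of "64 / Mc"]], rule inner)
  qed
qed

end
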